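(* Let $A$ be an associative unital algebra and $(H,\pi_l,\pi_r,\psi_l,\psi_r)$ an L-R-twisting datum for $A$, where $H$ is a Hopf algebra with bijective antipode $S$. Define $\pi:(H\otimes H^{op})\otimes A\to A$, $\pi(h\otimes h'\otimes a)=h\cdot a\cdot h'$, and $\psi:A\to(H\otimes H^{op})\otimes A$, $\psi(a)=(a_{\{-1\}}\otimes S^{-1}(a_{\{1\}}))\otimes a_{\{0\}}$. Then $(H\otimes H^{op},\pi,\psi)$ is a left twisting datum for $A$, and the map $\lambda:(A,\bullet)\to(A,\star)$, $\lambda(a)=a_{<0>}\cdot S^{-1}(a_{<1>})$, is an algebra isomorphism with inverse $\lambda^{-1}(a)=a_{<0>}\cdot a_{<1>}$.
   Context: Work over a field $k$. An L-R-twisting datum for an algebra $A$: $H$-bimodule algebra structure on $A$ (actions $h\cdot a$, $a\cdot h$, with $h\cdot(ab)=(h_1\cdot a)(h_2\cdot b)$, $(ab)\cdot h=(a\cdot h_1)(b\cdot h_2)$, $h\cdot1=1\cdot h=\varepsilon(h)1$), $H$-bicomodule algebra structure on $A$ (algebra maps $\psi_l(a)=a_{[-1]}\otimes a_{[0]}$, $\psi_r(a)=a_{<0>}\otimes a_{<1>}$ forming an $H$-bicomodule), and compatibilities $(h\cdot a)_{[-1]}\otimes(h\cdot a)_{[0]}=a_{[-1]}\otimes h\cdot a_{[0]}$, $(h\cdot a)_{<0>}\otimes(h\cdot a)_{<1>}=h\cdot a_{<0>}\otimes a_{<1>}$, $(a\cdot h)_{[-1]}\otimes(a\cdot h)_{[0]}=a_{[-1]}\otimes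 a_{[0]}\cdot h$, $(a\cdot h)_{<0>}\otimes(a\cdot h)_{<1>}=a_{<0>}\cdot h\otimes a_{<1>}$. The L-R-twisted product is $a\bullet b=(a_{[0]}\cdot b_{<1>})(a_{[-1]}\cdot b_{<0>})$. Notation $a_{\{-1\}}\otimes a_{\{0\}}\otimes a_{\{1\}}=a_{<0>_{[-1]}}\otimes a_{<0>_{[0]}}\otimes a_{<1>}=a_{[-1]}\otimes a_{[0]_{<0>}}\otimes a_{[0]_{<1>}}$. A left twisting datum $(K,\pi,\psi)$ for $A$ ($K$ a bialgebra): $A$ is a left $K$-module algebra ($k\cdot a$) and left $K$-comodule algebra ($a\mapsto a_{(-1)}\otimes a_{(0)}$) with $(k\cdot a)_{(-1)}\otimes(k\cdot a)_{(0)}=a_{(-1)}\otimes k\cdot a_{(0)}$; the left twisted product is $a\star b=a_{(0)}(a_{(-1)}\cdot b)$. Here $\star$ is the left twisted product for $(H\otimes H^{op},\pi,\psi)$. *)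

theory Defs
  imports Complex_Main "HOL-Library.Function_Algebras"
begin

definition lin_on :: "'v set \<Rightarrow> ('k::field \<Rightarrow> 'v::ab_group_add \<Rightarrow> 'v)
    \<Rightarrow> ('k \<Rightarrow> 'w::ab_group_add \<Rightarrow> 'w) \<Rightarrow> ('v \<Rightarrow> 'w) \<Rightarrow> bool" where
  "lin_on C s1 s2 f \<longleftrightarrow>
     (\<forall>x\<in>C. \<forall>y\<in>C. f (x + y) = f x + f y) \<and> (\<forall>c. \<forall>x\<in>C. f (s1 c x) = s2 c (f x))"

definition bilin_on :: "'u set \<Rightarrow> 'v set \<Rightarrow> ('k::field \<Rightarrow> 'u::ab_group_add \<Rightarrow> 'u)
    \<Rightarrow> ('k \<Rightarrow> 'v::ab_group_add \<Rightarrow> 'v) \<Rightarrow> ('k \<Rightarrow> 'w::ab_group_add \<Rightarrow> 'w)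
    \<Rightarrow> ('u \<Rightarrow> 'v \<Rightarrow> 'w) \<Rightarrow> bool" where
  "bilin_on C D s1 s2 s3 \<beta> \<longleftrightarrow>
     (\<forall>w\<in>D. lin_on C s1 s3 (\<lambda>v. \<beta> v w)) \<and> (\<forall>v\<in>C. lin_on D s2 s3 (\<beta> v))"

definition subsp :: "'v set \<Rightarrow> ('k::field \<Rightarrow> 'v::ab_group_add \<Rightarrow> 'v) \<Rightarrow> bool" where
  "subsp C s \<longleftrightarrow> vector_space s \<and> 0 \<in> C \<and> (\<forall>x\<in>C. \<forall>y\<in>C. x + y \<in> C) \<and> (\<forall>c. \<forall>x\<in>C. s c x \<in> C)"

text \<open>An element of V \<otimes> W is represented by the functional it induces on bilinear
  forms V \<times> W \<rightarrow> k (and 0 on non-bilinear maps). Since bilinear forms separate the points of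
  V \<otimes> W over a field, the span of the simple tensors below is canonically isomorphic to
  the algebraic tensor product V \<otimes>_k W.\<close>

type_synonym ('v, 'w, 'k) tensor = "('v \<Rightarrow> 'w \<Rightarrow> 'k) \<Rightarrow> 'k"

definition tens :: "('k::field \<Rightarrow> 'v::ab_group_add \<Rightarrow> 'v) \<Rightarrow> ('k \<Rightarrow> 'w::ab_group_add \<Rightarrow> 'w)
    \<Rightarrow> 'v \<Rightarrow> 'w \<Rightarrow> ('v, 'w, 'k) tensor" where
  "tens sv sw v w = (\<lambda>\<phi>. if bilin_on UNIV UNIV sv sw (*) \<phi> then \<phi> v w else 0)"

text \<open>scalar multiplication on tensors (addition is pointwise)\<close>
definition tscale :: "'k::field \<Rightarrow> ('b \<Rightarrow> 'k) \<Rightarrow> ('b \<Rightarrow> 'k)" where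
  "tscale c t = (\<lambda>\<phi>. c * t \<phi>)"

definition tspace :: "'v set \<Rightarrow> 'w set \<Rightarrow> ('k::field \<Rightarrow> 'v::ab_group_add \<Rightarrow> 'v)
    \<Rightarrow> ('k \<Rightarrow> 'w::ab_group_add \<Rightarrow> 'w) \<Rightarrow> ('v, 'w, 'k) tensor set" where
  "tspace C D sv sw = {t. \<exists>xs. set xs \<subseteq> C \<times> D \<and> t = sum_list (map (\<lambda>(v, w). tens sv sw v w) xs)}"

text \<open>linear map C \<otimes> D \<rightarrow> U induced by a bilinear map \<beta> (universal property):
  \<open>tlift \<beta> (\<Sum> v_i \<otimes> w_i) = \<Sum> \<beta> v_i w_i\<close>\<close>
definition tlift :: "'v set \<Rightarrow> 'w set \<Rightarrow> ('k::field \<Rightarrow> 'v::ab_group_add \<Rightarrow> 'v)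
    \<Rightarrow> ('k \<Rightarrow> 'w::ab_group_add \<Rightarrow> 'w) \<Rightarrow> ('v \<Rightarrow> 'w \<Rightarrow> 'u::monoid_add) \<Rightarrow> ('v, 'w, 'k) tensor \<Rightarrow> 'u" where
  "tlift C D sv sw \<beta> t = sum_list (map (\<lambda>(v, w). \<beta> v w)
      (SOME xs. set xs \<subseteq> C \<times> D \<and> t = sum_list (map (\<lambda>(v, w). tens sv sw v w) xs)))"

definition tmap where
  "tmap C D sv sw sv' sw' f g t = tlift C D sv sw (\<lambda>v w. tens sv' sw' (f v) (g w)) t"

definition tassoc where
  "tassoc C1 C2 C3 s1 s2 s3 t =
     tlift (tspace C1 C2 s1 s2) C3 tscale s3
       (\<lambda>x w. tlift C1 C2 s1 s2 (\<lambda>u v. tens s1 tscale u (tens s2 s3 v w)) x) t"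

definition tmult where
  "tmult C D sv sw mv mw x y =
     tlift C D sv sw (\<lambda>a b. tlift C D sv sw (\<lambda>c d. tens sv sw (mv a c) (mw b d)) y) x"

definition alg where
  "alg C s m u \<longleftrightarrow> subsp C s \<and> u \<in> C \<and> (\<forall>x\<in>C. \<forall>y\<in>C. m x y \<in> C) \<and> bilin_on C C s s s m
     \<and> (\<forall>x\<in>C. \<forall>y\<in>C. \<forall>z\<in>C. m (m x y) z = m x (m y z)) \<and> (\<forall>x\<in>C. m u x = x \<and> m x u = x)"

definition coalg where
  "coalg C s \<Delta> \<epsilon> \<longleftrightarrow> subsp C s \<and> (\<forall>x\<in>C. \<Delta> x \<in> tspace C C s s)
     \<and> lin_on C s tscale \<Delta> \<and> lin_on C s (*) \<epsilon>
     \<and> (\<forall>x\<in>C. tassoc C C C s s s (tmap C C s s tscale s \<Delta> id (\<Delta> x))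
                = tmap C C s s s tscale id \<Delta> (\<Delta> x))
     \<and> (\<forall>x\<in>C. tlift C C s s (\<lambda>a b. s (\<epsilon> a) b) (\<Delta> x) = x
              \<and> tlift C C s s (\<lambda>a b. s (\<epsilon> b) a) (\<Delta> x) = x)"

definition bialg where
  "bialg C s m u \<Delta> \<epsilon> \<longleftrightarrow> alg C s m u \<and> coalg C s \<Delta> \<epsilon>
     \<and> (\<forall>x\<in>C. \<forall>y\<in>C. \<Delta> (m x y) = tmult C C s s m m (\<Delta> x) (\<Delta> y)) \<and> \<Delta> u = tens s s u u
     \<and> (\<forall>x\<in>C. \<forall>y\<in>C. \<epsilon> (m x y) = \<epsilon> x * \<epsilon> y) \<and> \<epsilon> u = 1"

definition hopf where
  "hopf C s m u \<Delta> \<epsilon> S \<longleftrightarrow> bialg C s m u \<Delta> \<epsilon> \<and> (\<forall>x\<in>C. S x \<in> C) \<and> lin_on C s s S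
     \<and> (\<forall>x\<in>C. tlift C C s s (\<lambda>a b. m (S a) b) (\<Delta> x) = s (\<epsilon> x) u
              \<and> tlift C C s s (\<lambda>a b. m a (S b)) (\<Delta> x) = s (\<epsilon> x) u)"

definition lmod_alg where
  "lmod_alg CK sk mk uk \<Delta>k \<epsilon>k CA sa ma ua act \<longleftrightarrow>
     (\<forall>x\<in>CK. \<forall>a\<in>CA. act x a \<in> CA) \<and> bilin_on CK CA sk sa sa act
     \<and> (\<forall>x\<in>CK. \<forall>y\<in>CK. \<forall>a\<in>CA. act (mk x y) a = act x (act y a)) \<and> (\<forall>a\<in>CA. act uk a = a)
     \<and> (\<forall>x\<in>CK. \<forall>a\<in>CA. \<forall>b\<in>CA.
          act x (ma a b) = tlift CK CK sk sk (\<lambda>x1 x2. ma (act x1 a) (act x2 b)) (\<Delta>k x))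
     \<and> (\<forall>x\<in>CK. act x ua = sa (\<epsilon>k x) ua)"

definition rmod_alg where
  "rmod_alg CH sh mh uh \<Delta>h \<epsilon>h CA sa ma ua ract \<longleftrightarrow>
     (\<forall>a\<in>CA. \<forall>x\<in>CH. ract a x \<in> CA) \<and> bilin_on CA CH sa sh sa ract
     \<and> (\<forall>x\<in>CH. \<forall>y\<in>CH. \<forall>a\<in>CA. ract a (mh x y) = ract (ract a x) y) \<and> (\<forall>a\<in>CA. ract a uh = a)
     \<and> (\<forall>x\<in>CH. \<forall>a\<in>CA. \<forall>b\<in>CA.
          ract (ma a b) x = tlift CH CH sh sh (\<lambda>x1 x2. ma (ract a x1) (ract b x2)) (\<Delta>h x))
     \<and> (\<forall>x\<in>CH. ract ua x = sa (\<epsilon>h x) ua)"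

definition lcomod_alg where
  "lcomod_alg CK sk mk uk \<Delta>k \<epsilon>k CA sa ma ua \<rho> \<longleftrightarrow>
     (\<forall>a\<in>CA. \<rho> a \<in> tspace CK CA sk sa) \<and> lin_on CA sa tscale \<rho>
     \<and> (\<forall>a\<in>CA. tassoc CK CK CA sk sk sa (tmap CK CA sk sa tscale sa \<Delta>k id (\<rho> a))
                = tmap CK CA sk sa sk tscale id \<rho> (\<rho> a))
     \<and> (\<forall>a\<in>CA. tlift CK CA sk sa (\<lambda>x b. sa (\<epsilon>k x) b) (\<rho> a) = a)
     \<and> (\<forall>a\<in>CA. \<forall>b\<in>CA. \<rho> (ma a b) = tmult CK CA sk sa mk ma (\<rho> a) (\<rho> b))
     \<and> \<rho> ua = tens sk sa uk ua"

definition rcomod_alg where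
  "rcomod_alg CH sh mh uh \<Delta>h \<epsilon>h CA sa ma ua \<rho> \<longleftrightarrow>
     (\<forall>a\<in>CA. \<rho> a \<in> tspace CA CH sa sh) \<and> lin_on CA sa tscale \<rho>
     \<and> (\<forall>a\<in>CA. tassoc CA CH CH sa sh sh (tmap CA CH sa sh tscale sh \<rho> id (\<rho> a))
                = tmap CA CH sa sh sa tscale id \<Delta>h (\<rho> a))
     \<and> (\<forall>a\<in>CA. tlift CA CH sa sh (\<lambda>b x. sa (\<epsilon>h x) b) (\<rho> a) = a)
     \<and> (\<forall>a\<in>CA. \<forall>b\<in>CA. \<rho> (ma a b) = tmult CA CH sa sh ma mh (\<rho> a) (\<rho> b))
     \<and> \<rho> ua = tens sa sh ua uh"

definition lr_datum :: "('k::field \<Rightarrow> 'h::ring_1 \<Rightarrow> 'h) \<Rightarrow> ('h \<Rightarrow> ('h, 'h, 'k) tensor) \<Rightarrow> ('h \<Rightarrow> 'k)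
    \<Rightarrow> ('k \<Rightarrow> 'a::ring_1 \<Rightarrow> 'a) \<Rightarrow> ('h \<Rightarrow> 'a \<Rightarrow> 'a) \<Rightarrow> ('a \<Rightarrow> 'h \<Rightarrow> 'a)
    \<Rightarrow> ('a \<Rightarrow> ('h, 'a, 'k) tensor) \<Rightarrow> ('a \<Rightarrow> ('a, 'h, 'k) tensor) \<Rightarrow> bool" where
  "lr_datum sh \<Delta> \<epsilon> sa lact ract psil psir \<longleftrightarrow>
     bialg UNIV sh (*) 1 \<Delta> \<epsilon> \<and> alg UNIV sa (*) 1
     \<comment> \<open>H-bimodule algebra\<close>
     \<and> lmod_alg UNIV sh (*) 1 \<Delta> \<epsilon> UNIV sa (*) 1 lact
     \<and> rmod_alg UNIV sh (*) 1 \<Delta> \<epsilon> UNIV sa (*) 1 ract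
     \<and> (\<forall>h g a. ract (lact h a) g = lact h (ract a g))
     \<comment> \<open>H-bicomodule algebra\<close>
     \<and> lcomod_alg UNIV sh (*) 1 \<Delta> \<epsilon> UNIV sa (*) 1 psil
     \<and> rcomod_alg UNIV sh (*) 1 \<Delta> \<epsilon> UNIV sa (*) 1 psir
     \<and> (\<forall>a. tassoc UNIV UNIV UNIV sh sa sh (tmap UNIV UNIV sa sh tscale sh psil id (psir a))
             = tmap UNIV UNIV sh sa sh tscale id psir (psil a))
     \<comment> \<open>compatibilities\<close>
     \<and> (\<forall>h a. psil (lact h a) = tmap UNIV UNIV sh sa sh sa id (lact h) (psil a))
     \<and> (\<forall>h a. psir (lact h a) = tmap UNIV UNIV sa sh sa sh (lact h) id (psir a))
     \<and> (\<forall>h a. psil (ract a h) = tmap UNIV UNIV sh sa sh sa id (\<lambda>b. ract b h) (psil a))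
     \<and> (\<forall>h a. psir (ract a h) = tmap UNIV UNIV sa sh sa sh (\<lambda>b. ract b h) id (psir a))"

text \<open>L-R-twisted product  a \<bullet> b = (a_[0] \<cdot> b_<1>)(a_[-1] \<cdot> b_<0>)\<close>
definition lr_prod where
  "lr_prod sh sa lact ract psil psir a b =
     tlift UNIV UNIV sh sa (\<lambda>h a0. tlift UNIV UNIV sa sh
        (\<lambda>b0 h1. ract a0 h1 * lact h b0) (psir b)) (psil a)"

definition left_twisting_datum where
  "left_twisting_datum CK sk mk uk \<Delta>k \<epsilon>k CA sa ma ua \<pi> \<psi> \<longleftrightarrow>
     bialg CK sk mk uk \<Delta>k \<epsilon>k \<and> alg CA sa ma ua
     \<and> lmod_alg CK sk mk uk \<Delta>k \<epsilon>k CA sa ma ua \<pi>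
     \<and> lcomod_alg CK sk mk uk \<Delta>k \<epsilon>k CA sa ma ua \<psi>
     \<and> (\<forall>x\<in>CK. \<forall>a\<in>CA. \<psi> (\<pi> x a) = tmap CK CA sk sa sk sa id (\<pi> x) (\<psi> a))"

text \<open>left twisted product  a \<star> b = a_(0) (a_(-1) \<cdot> b)\<close>
definition lt_prod where
  "lt_prod CK CA sk sa ma \<pi> \<psi> a b = tlift CK CA sk sa (\<lambda>x c. ma c (\<pi> x b)) (\<psi> a)"

definition hhop_carrier where "hhop_carrier sh = tspace UNIV UNIV sh sh"

definition hhop_mult where
  "hhop_mult sh = tmult UNIV UNIV sh sh (*) (\<lambda>a b. b * a)"

definition hhop_unit where "hhop_unit sh = tens sh sh 1 1"

definition hhop_comult where
  "hhop_comult sh \<Delta> t = tlift UNIV UNIV sh sh (\<lambda>h h'.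
      tlift UNIV UNIV sh sh (\<lambda>h1 h2. tlift UNIV UNIV sh sh (\<lambda>g1 g2.
         tens tscale tscale (tens sh sh h1 g1) (tens sh sh h2 g2)) (\<Delta> h')) (\<Delta> h)) t"

definition hhop_counit where
  "hhop_counit sh \<epsilon> t = tlift UNIV UNIV sh sh (\<lambda>h h'. \<epsilon> h * \<epsilon> h') t"

definition pi_act where
  "pi_act sh lact ract t a = tlift UNIV UNIV sh sh (\<lambda>h h'. ract (lact h a) h') t"

text \<open>\<psi>(a) = (a_{-1} \<otimes> S^{-1}(a_{1})) \<otimes> a_{0}, where
  a_{-1} \<otimes> a_{0} \<otimes> a_{1} = a_<0>_[-1] \<otimes> a_<0>_[0] \<otimes> a_<1>\<close>
definition psi_coact where
  "psi_coact sh sa S psil psir a =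
     tlift UNIV UNIV sa sh (\<lambda>x h'. tlift UNIV UNIV sh sa
        (\<lambda>h b. tens tscale sa (tens sh sh h (inv S h')) b) (psil x)) (psir a)"

definition lam where
  "lam sa sh S ract psir a = tlift UNIV UNIV sa sh (\<lambda>b h. ract b (inv S h)) (psir a)"

definition lam_inv where
  "lam_inv sa sh ract psir a = tlift UNIV UNIV sa sh (\<lambda>b h. ract b h) (psir a)"

definition alg_hom where
  "alg_hom C1 s1 m1 u1 C2 s2 m2 u2 f \<longleftrightarrow> (\<forall>x\<in>C1. f x \<in> C2) \<and> lin_on C1 s1 s2 f
     \<and> (\<forall>x\<in>C1. \<forall>y\<in>C1. f (m1 x y) = m2 (f x) (f y)) \<and> f u1 = u2"

definition alg_iso_with_inv where
  "alg_iso_with_inv C1 s1 m1 u1 C2 s2 m2 u2 f g \<longleftrightarrow> alg_hom C1 s1 m1 u1 C2 s2 m2 u2 f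
     \<and> (\<forall>x\<in>C1. g (f x) = x) \<and> (\<forall>y\<in>C2. g y \<in> C1 \<and> f (g y) = y)"

end

theory Submission
  imports Defs
begin


lemma sum_list_apply: "(sum_list xs) x = sum_list (map (\<lambda>f. f x) xs)"
  by (induction xs) auto

definition rep where
  "rep C D sv sw t = (SOME xs. set xs \<subseteq> C \<times> D \<and> t = sum_list (map (\<lambda>(v, w). tens sv sw v w) xs))"

lemma tlift_rep: "tlift C D sv sw \<beta> t = sum_list (map (\<lambda>x. \<beta> (fst x) (snd x)) (rep C D sv sw t))"
  by (simp add: tlift_def rep_def split_def)

lemma rep_spec:
  assumes "t \<in> tspace C D sv sw"
  shows "set (rep C D sv sw t) \<subseteq> C \<times> D" "t = sum_list (map (\<lambda>(v, w). tens sv sw v w) (rep C D sv sw t))"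
proof -
  have "set (rep C D sv sw t) \<subseteq> C \<times> D \<and> t = sum_list (map (\<lambda>(v, w). tens sv sw v w) (rep C D sv sw t))"
  proof -
    from assms obtain xs where "set xs \<subseteq> C \<times> D \<and> t = sum_list (map (\<lambda>(v, w). tens sv sw v w) xs)"
      unfolding tspace_def by blast
    then show ?thesis unfolding rep_def by (rule someI)
  qed
  then show "set (rep C D sv sw t) \<subseteq> C \<times> D" "t = sum_list (map (\<lambda>(v, w). tens sv sw v w) (rep C D sv sw t))"
    by auto
qed

lemma sum_list_addf': "sum_list (map (\<lambda>x. f x + g x) xs) = sum_list (map f xs) + sum_list (map g xs)"
  for f g :: "_ \<Rightarrow> 'u::comm_monoid_add"
  by (induction xs) (auto simp: algebra_simps)

lemma tlift_add_fun:
  "tlift C D sv sw (\<lambda>v w. \<beta> v w + \<gamma> v w) t = tlift C D sv sw \<beta> t + tlift C D sv sw \<gamma> t"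
  for \<beta> \<gamma> :: "_ \<Rightarrow> _ \<Rightarrow> 'u::comm_monoid_add"
  unfolding tlift_rep by (simp add: sum_list_addf')

lemma sum_list_additive:
  assumes "\<And>x y. L (x + y) = L x + L y" "L 0 = 0"
  shows "L (sum_list xs) = sum_list (map L xs)"
  using assms by (induction xs) auto

lemma tlift_additive:
  assumes "\<And>x y. L (x + y) = L x + L y" "L 0 = 0"
  shows "L (tlift C D sv sw \<beta> t) = tlift C D sv sw (\<lambda>v w. L (\<beta> v w)) t"
  unfolding tlift_rep by (simp add: sum_list_additive[OF assms] o_def)

lemma sum_list_additive_on:
  assumes "\<And>x y. x \<in> M \<Longrightarrow> y \<in> M \<Longrightarrow> L (x + y) = L x + L y" "L 0 = 0"
    "\<And>x y. x \<in> M \<Longrightarrow> y \<in> M \<Longrightarrow> x + y \<in> M" "0 \<in> M" "set xs \<subseteq> M"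
  shows "L (sum_list xs) = sum_list (map L xs) \<and> sum_list xs \<in> M"
  using assms(5) proof (induction xs)
  case Nil then show ?case using assms by auto
next
  case (Cons a xs) then show ?case using assms(1,3) by auto
qed

lemma tlift_additive_on:
  assumes "\<And>x y. x \<in> M \<Longrightarrow> y \<in> M \<Longrightarrow> L (x + y) = L x + L y" "L 0 = 0"
    "\<And>x y. x \<in> M \<Longrightarrow> y \<in> M \<Longrightarrow> x + y \<in> M" "0 \<in> M"
    and t: "t \<in> tspace C D sv sw" and b: "\<And>v w. v \<in> C \<Longrightarrow> w \<in> D \<Longrightarrow> \<beta> v w \<in> M"
  shows "L (tlift C D sv sw \<beta> t) = tlift C D sv sw (\<lambda>v w. L (\<beta> v w)) t"
proof -
  have "set (map (\<lambda>x. \<beta> (fst x) (snd x)) (rep C D sv sw t)) \<subseteq> M" using rep_spec(1)[OF t] b by auto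
  from sum_list_additive_on[OF assms(1-4) this] show ?thesis
    unfolding tlift_rep by (simp add: o_def)
qed

lemma tlift_in_closed:
  assumes "\<And>x y. x \<in> M \<Longrightarrow> y \<in> M \<Longrightarrow> x + y \<in> M" "0 \<in> M"
    and t: "t \<in> tspace C D sv sw" and b: "\<And>v w. v \<in> C \<Longrightarrow> w \<in> D \<Longrightarrow> \<beta> v w \<in> M"
  shows "tlift C D sv sw \<beta> t \<in> M"
proof -
  have "set (map (\<lambda>x. \<beta> (fst x) (snd x)) (rep C D sv sw t)) \<subseteq> M" using rep_spec(1)[OF t] b by auto
  from sum_list_additive_on[of M id, OF _ _ assms(1,2) this] show ?thesis
    unfolding tlift_rep by simp
qed

lemma sum_list_swap:
  "sum_list (map (\<lambda>x. sum_list (map (\<lambda>y. g x y) ys)) xs) = sum_list (map (\<lambda>y. sum_list (map (\<lambda>x. g x y) xs)) ys)"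
  for g :: "_ \<Rightarrow> _ \<Rightarrow> 'u::comm_monoid_add"
proof (induction xs)
  case Nil then show ?case by (simp add: sum_list_additive[of "\<lambda>x. 0"])
next
  case (Cons a xs) then show ?case by (simp add: sum_list_addf')
qed

lemma tlift_swap:
  "tlift C D sv sw (\<lambda>a b. tlift C' D' sv' sw' (\<lambda>c d. \<gamma> a b c d) t2) t1
   = tlift C' D' sv' sw' (\<lambda>c d. tlift C D sv sw (\<lambda>a b. \<gamma> a b c d) t1) t2"
  for \<gamma> :: "_ \<Rightarrow> _ \<Rightarrow> _ \<Rightarrow> _ \<Rightarrow> 'u::comm_monoid_add"
  unfolding tlift_rep by (rule sum_list_swap)

lemma tlift_cong:
  assumes "t \<in> tspace C D sv sw" "\<And>v w. v \<in> C \<Longrightarrow> w \<in> D \<Longrightarrow> \<beta> v w = \<gamma> v w"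
  shows "tlift C D sv sw \<beta> t = tlift C D sv sw \<gamma> t"
  unfolding tlift_rep using rep_spec(1)[OF assms(1)] assms(2)
  by (intro arg_cong[where f=sum_list] map_cong) auto

lemma tlift_zero_fun: "tlift C D sv sw (\<lambda>v w. 0) t = 0"
  unfolding tlift_rep by (simp add: sum_list_additive[of "\<lambda>x. 0"])

lemma tlift_eta: "t \<in> tspace C D sv sw \<Longrightarrow> tlift C D sv sw (tens sv sw) t = t"
  using rep_spec(2)[of t C D sv sw] unfolding tlift_rep by (simp add: split_def)

lemma vs_field: "vector_space ((*)::'k::field\<Rightarrow>'k\<Rightarrow>'k)"
  by unfold_locales (auto simp: algebra_simps)

lemma vs_tscale: "vector_space (tscale :: 'k::field \<Rightarrow> ('b \<Rightarrow> 'k) \<Rightarrow> _)"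
  by unfold_locales (auto simp: tscale_def algebra_simps fun_eq_iff)

lemma proj_exists:
  assumes vs: "vector_space s" and C: "subsp C s"
  obtains P where "Vector_Spaces.linear s s P" "\<And>x. P x \<in> C" "\<And>x. x \<in> C \<Longrightarrow> P x = x"
proof -
  interpret v: vector_space s by fact
  interpret vp: vector_space_pair s s by unfold_locales
  have sub: "v.subspace C" using C unfolding subsp_def v.subspace_def by auto
  obtain B where B: "B \<subseteq> C" "v.independent B" "C \<subseteq> v.span B" by (rule v.maximal_independent_subset)
  have lin: "Vector_Spaces.linear s s (vp.construct B id)" by (rule vp.linear_construct[OF B(2)])
  have span: "v.span B = C" using B sub by (simp add: v.span_subspace)
  have r: "vp.construct B id x \<in> C" for x
    using vp.construct_in_span[OF B(2), of id x] span by simp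
  have i: "vp.construct B id x = x" if "x \<in> C" for x
    using vp.linear_eq_on[OF lin v.linear_id, of x B] that span vp.construct_basis[OF B(2)] by auto
  show ?thesis using that lin r i by blast
qed

lemma sep_exists:
  assumes vs: "vector_space (su :: 'k::field \<Rightarrow> 'u::ab_group_add \<Rightarrow> 'u)" and u: "u \<noteq> 0"
  obtains f where "Vector_Spaces.linear su ((*)::'k\<Rightarrow>'k\<Rightarrow>'k) f" "f u = 1"
proof -
  interpret v: vector_space su by fact
  interpret vk: vector_space "(*)::'k\<Rightarrow>'k\<Rightarrow>'k" by (rule vs_field)
  interpret vp: vector_space_pair su "(*)::'k\<Rightarrow>'k\<Rightarrow>'k" by unfold_locales
  have ind: "v.independent {u}" using u v.independent_insertI[of u "{}"] by auto
  show ?thesis using that vp.linear_construct[OF ind, of "\<lambda>_. 1"] vp.construct_basis[OF ind, of u "\<lambda>_. 1"] by auto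
qed

lemma linD:
  assumes "Vector_Spaces.linear s1 s2 f"
  shows "f (x + y) = f x + f y" "f (s1 c x) = s2 c (f x)" "f 0 = 0" "f (x - y) = f x - f y"
proof -
  interpret l: Vector_Spaces.linear s1 s2 f by fact
  show "f (x + y) = f x + f y" "f (s1 c x) = s2 c (f x)" "f 0 = 0" "f (x - y) = f x - f y"
    by (auto simp: l.add l.scale l.diff)
qed

lemma lin_sum_list: "Vector_Spaces.linear s1 s2 f \<Longrightarrow> f (sum_list xs) = sum_list (map f xs)"
  by (rule sum_list_additive) (auto simp: linD)

lemma tens_apply_bilin: "bilin_on UNIV UNIV sv sw (*) \<phi> \<Longrightarrow> tens sv sw v w \<phi> = \<phi> v w"
  by (simp add: tens_def)

lemma tens_apply_nonbilin: "\<not> bilin_on UNIV UNIV sv sw (*) \<phi> \<Longrightarrow> tens sv sw v w \<phi> = 0"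
  by (simp add: tens_def)

lemma bilinD:
  assumes "bilin_on C D s1 s2 s3 \<beta>"
  shows "x \<in> C \<Longrightarrow> y \<in> C \<Longrightarrow> z \<in> D \<Longrightarrow> \<beta> (x + y) z = \<beta> x z + \<beta> y z"
    and "x \<in> C \<Longrightarrow> z \<in> D \<Longrightarrow> \<beta> (s1 c x) z = s3 c (\<beta> x z)"
    and "x' \<in> C \<Longrightarrow> y' \<in> D \<Longrightarrow> z' \<in> D \<Longrightarrow> \<beta> x' (y' + z') = \<beta> x' y' + \<beta> x' z'"
    and "x' \<in> C \<Longrightarrow> z' \<in> D \<Longrightarrow> \<beta> x' (s2 c z') = s3 c (\<beta> x' z')"
  using assms unfolding bilin_on_def lin_on_def by blast+

lemma bilinI:
  assumes "\<And>x y z. x \<in> C \<Longrightarrow> y \<in> C \<Longrightarrow> z \<in> D \<Longrightarrow> \<beta> (x + y) z = \<beta> x z + \<beta> y z"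
    and "\<And>x z c. x \<in> C \<Longrightarrow> z \<in> D \<Longrightarrow> \<beta> (s1 c x) z = s3 c (\<beta> x z)"
    and "\<And>x y z. x \<in> C \<Longrightarrow> y \<in> D \<Longrightarrow> z \<in> D \<Longrightarrow> \<beta> x (y + z) = \<beta> x y + \<beta> x z"
    and "\<And>x z c. x \<in> C \<Longrightarrow> z \<in> D \<Longrightarrow> \<beta> x (s2 c z) = s3 c (\<beta> x z)"
  shows "bilin_on C D s1 s2 s3 \<beta>"
  using assms unfolding bilin_on_def lin_on_def by blast

lemma tlift_sum_list:
  assumes sv: "vector_space sv" and sw: "vector_space sw" and su: "vector_space su"
    and C: "subsp C sv" and D: "subsp D sw" and bl: "bilin_on C D sv sw su \<beta>"
    and xs: "set xs \<subseteq> C \<times> D"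
  shows "tlift C D sv sw \<beta> (sum_list (map (\<lambda>x. tens sv sw (fst x) (snd x)) xs))
       = sum_list (map (\<lambda>x. \<beta> (fst x) (snd x)) xs)"
proof -
  let ?t = "sum_list (map (\<lambda>x. tens sv sw (fst x) (snd x)) xs)"
  have tsp: "?t \<in> tspace C D sv sw" using xs unfolding tspace_def by (auto simp: split_def)
  define ys where "ys = rep C D sv sw ?t"
  have ys: "set ys \<subseteq> C \<times> D" "?t = sum_list (map (\<lambda>x. tens sv sw (fst x) (snd x)) ys)"
    using rep_spec[OF tsp] unfolding ys_def by (auto simp: split_def)
  obtain P where P: "Vector_Spaces.linear sv sv P" "\<And>x. P x \<in> C" "\<And>x. x \<in> C \<Longrightarrow> P x = x"
    using proj_exists[OF sv C] by blast
  obtain Q where Q: "Vector_Spaces.linear sw sw Q" "\<And>x. Q x \<in> D" "\<And>x. x \<in> D \<Longrightarrow> Q x = x"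
    using proj_exists[OF sw D] by blast
  have key: "f (sum_list (map (\<lambda>x. \<beta> (fst x) (snd x)) ys)) = f (sum_list (map (\<lambda>x. \<beta> (fst x) (snd x)) xs))"
    if f: "Vector_Spaces.linear su (*) f" for f
  proof -
    define \<phi> where "\<phi> v w = f (\<beta> (P v) (Q w))" for v w
    have bphi: "bilin_on UNIV UNIV sv sw (*) \<phi>"
      unfolding \<phi>_def
      by (rule bilinI) (simp_all add: linD[OF P(1)] linD[OF Q(1)] linD[OF f] P(2) Q(2) bilinD[OF bl])
    have ev: "(sum_list (map (\<lambda>x. tens sv sw (fst x) (snd x)) zs)) \<phi> = f (sum_list (map (\<lambda>x. \<beta> (fst x) (snd x)) zs))"
      if "set zs \<subseteq> C \<times> D" for zs
    proof -
      have "(sum_list (map (\<lambda>x. tens sv sw (fst x) (snd x)) zs)) \<phi> = sum_list (map (\<lambda>x. \<phi> (fst x) (snd x)) zs)"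
        by (simp add: sum_list_apply o_def tens_apply_bilin[OF bphi])
      also have "\<dots> = sum_list (map (\<lambda>x. f (\<beta> (fst x) (snd x))) zs)"
        using that by (intro arg_cong[where f=sum_list] map_cong) (auto simp: \<phi>_def P(3) Q(3))
      also have "\<dots> = f (sum_list (map (\<lambda>x. \<beta> (fst x) (snd x)) zs))"
        by (simp add: lin_sum_list[OF f] o_def)
      finally show ?thesis .
    qed
    have "(sum_list (map (\<lambda>x. tens sv sw (fst x) (snd x)) ys)) \<phi> = (sum_list (map (\<lambda>x. tens sv sw (fst x) (snd x)) xs)) \<phi>"
      using ys(2) by (rule sym[THEN arg_cong[where f="\<lambda>t. t \<phi>"]])
    then show ?thesis by (simp only: ev[OF ys(1)] ev[OF xs])
  qed
  have eq: "sum_list (map (\<lambda>x. \<beta> (fst x) (snd x)) ys) = sum_list (map (\<lambda>x. \<beta> (fst x) (snd x)) xs)"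
  proof (rule ccontr)
    assume ne: "\<not> ?thesis"
    define d where "d = sum_list (map (\<lambda>x. \<beta> (fst x) (snd x)) ys) - sum_list (map (\<lambda>x. \<beta> (fst x) (snd x)) xs)"
    have "d \<noteq> 0" using ne unfolding d_def by simp
    then obtain f where f: "Vector_Spaces.linear su (*) f" "f d = 1"
      using sep_exists[OF su] by blast
    have "f d = f (sum_list (map (\<lambda>x. \<beta> (fst x) (snd x)) ys)) - f (sum_list (map (\<lambda>x. \<beta> (fst x) (snd x)) xs))"
      unfolding d_def by (rule linD(4)[OF f(1)])
    then show False using key[OF f(1)] f(2) by simp
  qed
  show ?thesis unfolding tlift_rep ys_def[symmetric] by (rule eq)
qed


lemma tens_bilin: "bilin_on UNIV UNIV sv sw tscale (tens sv sw)"
  by (rule bilinI) (auto simp: tens_def tscale_def fun_eq_iff bilinD algebra_simps)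

lemma tens_add1: "tens sv sw (v + v') w = tens sv sw v w + tens sv sw v' w"
  and tens_add2: "tens sv sw v (w + w') = tens sv sw v w + tens sv sw v w'"
  and tens_scale1: "tens sv sw (sv c v) w = tscale c (tens sv sw v w)"
  and tens_scale2: "tens sv sw v (sw c w) = tscale c (tens sv sw v w)"
  using bilinD[OF tens_bilin] by auto

lemma tspace_tens: "v \<in> C \<Longrightarrow> w \<in> D \<Longrightarrow> tens sv sw v w \<in> tspace C D sv sw"
  unfolding tspace_def by (rule CollectI, rule exI[of _ "[(v,w)]"]) auto

lemma tspace_zero: "0 \<in> tspace C D sv sw"
  unfolding tspace_def by (rule CollectI, rule exI[of _ "[]"]) auto

lemma tspace_add: "t1 \<in> tspace C D sv sw \<Longrightarrow> t2 \<in> tspace C D sv sw \<Longrightarrow> t1 + t2 \<in> tspace C D sv sw"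
  unfolding tspace_def
proof (clarify)
  fix xs ys assume "set xs \<subseteq> C \<times> D" "set ys \<subseteq> C \<times> D"
  then show "\<exists>zs. set zs \<subseteq> C \<times> D \<and> (\<Sum>(x, y)\<leftarrow>xs. tens sv sw x y) + (\<Sum>(x, y)\<leftarrow>ys. tens sv sw x y) = (\<Sum>(x, y)\<leftarrow>zs. tens sv sw x y)"
    by (intro exI[of _ "xs @ ys"]) auto
qed

lemma tscale_add: "tscale c (t1 + t2) = tscale c t1 + tscale c t2"
  by (simp add: tscale_def fun_eq_iff algebra_simps)

lemma tscale_zero: "tscale c 0 = 0"
  by (simp add: tscale_def fun_eq_iff)

lemma tscale_sum_list: "tscale c (sum_list xs) = sum_list (map (tscale c) xs)"
  by (induction xs) (simp_all add: tscale_def fun_eq_iff algebra_simps)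

lemma vsD:
  assumes "vector_space s"
  shows "s c (x + y) = s c x + s c y" "s c 0 = 0" "s (a + b) x = s a x + s b x" "s a (s b x) = s (a * b) x"
    "s 1 x = x" "s 0 x = 0" "s c (x - y) = s c x - s c y" "s c (- x) = - s c x"
proof -
  interpret vector_space s by fact
  show "s c (x + y) = s c x + s c y" "s c 0 = 0" "s (a + b) x = s a x + s b x" "s a (s b x) = s (a * b) x"
    "s 1 x = x" "s 0 x = 0" "s c (x - y) = s c x - s c y" "s c (- x) = - s c x"
    by (auto simp: scale_right_distrib scale_left_distrib scale_right_diff_distrib)
qed

lemma tspace_scale:
  assumes C: "subsp C sv" and t: "t \<in> tspace C D sv sw"
  shows "tscale c t \<in> tspace C D sv sw"
proof -
  from t obtain xs where xs: "set xs \<subseteq> C \<times> D" "t = sum_list (map (\<lambda>x. tens sv sw (fst x) (snd x)) xs)"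
    unfolding tspace_def by (auto simp: split_def)
  have "tscale c t = sum_list (map (\<lambda>x. tens sv sw (fst x) (snd x)) (map (\<lambda>x. (sv c (fst x), snd x)) xs))"
    unfolding xs(2) tscale_sum_list by (simp add: o_def tens_scale1)
  moreover have "set (map (\<lambda>x. (sv c (fst x), snd x)) xs) \<subseteq> C \<times> D"
    using xs(1) C unfolding subsp_def by auto
  ultimately show ?thesis unfolding tspace_def mem_Collect_eq
    by (intro exI[of _ "map (\<lambda>x. (sv c (fst x), snd x)) xs"]) (simp add: split_def)
qed

lemma subsp_tspace:
  assumes C: "subsp C sv"
  shows "subsp (tspace C D sv sw) tscale"
  unfolding subsp_def using vs_tscale tspace_zero tspace_add tspace_scale[OF C] by blast

lemma subsp_UNIV: "vector_space s \<Longrightarrow> subsp UNIV s"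
  unfolding subsp_def by auto

lemma subsp_vs: "subsp C s \<Longrightarrow> vector_space s"
  unfolding subsp_def by auto

lemma subspD: "subsp C s \<Longrightarrow> 0 \<in> C" "subsp C s \<Longrightarrow> x \<in> C \<Longrightarrow> y \<in> C \<Longrightarrow> x + y \<in> C"
  "subsp C s \<Longrightarrow> x \<in> C \<Longrightarrow> s c x \<in> C"
  unfolding subsp_def by auto

locale tctx =
  fixes C :: "'v::ab_group_add set" and D :: "'w::ab_group_add set"
    and sv :: "'k::field \<Rightarrow> 'v \<Rightarrow> 'v" and sw :: "'k \<Rightarrow> 'w \<Rightarrow> 'w"
  assumes C: "subsp C sv" and D: "subsp D sw"
begin

lemma vsv: "vector_space sv" and vsw: "vector_space sw"
  using C D subsp_vs by auto

lemma tlift_tens: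
  assumes su: "vector_space su" and bl: "bilin_on C D sv sw su \<beta>" and v: "v \<in> C" and w: "w \<in> D"
  shows "tlift C D sv sw \<beta> (tens sv sw v w) = \<beta> v w"
  using tlift_sum_list[OF vsv vsw su C D bl, of "[(v,w)]"] v w by simp

lemma tlift_add:
  assumes su: "vector_space su" and bl: "bilin_on C D sv sw su \<beta>"
    and t1: "t1 \<in> tspace C D sv sw" and t2: "t2 \<in> tspace C D sv sw"
  shows "tlift C D sv sw \<beta> (t1 + t2) = tlift C D sv sw \<beta> t1 + tlift C D sv sw \<beta> t2"
proof -
  let ?r1 = "rep C D sv sw t1" and ?r2 = "rep C D sv sw t2"
  have "t1 + t2 = sum_list (map (\<lambda>x. tens sv sw (fst x) (snd x)) (?r1 @ ?r2))"
    using rep_spec(2)[OF t1] rep_spec(2)[OF t2] by (simp add: split_def)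
  moreover have "set (?r1 @ ?r2) \<subseteq> C \<times> D" using rep_spec(1)[OF t1] rep_spec(1)[OF t2] by auto
  ultimately show ?thesis
    using tlift_sum_list[OF vsv vsw su C D bl, of "?r1 @ ?r2"] by (simp add: tlift_rep)
qed

lemma tlift_zero:
  assumes su: "vector_space su" and bl: "bilin_on C D sv sw su \<beta>"
  shows "tlift C D sv sw \<beta> 0 = 0"
  using tlift_sum_list[OF vsv vsw su C D bl, of "[]"] by simp

lemma tlift_scale:
  assumes su: "vector_space su" and bl: "bilin_on C D sv sw su \<beta>"
    and t: "t \<in> tspace C D sv sw"
  shows "tlift C D sv sw \<beta> (tscale c t) = su c (tlift C D sv sw \<beta> t)"
proof -
  let ?r = "rep C D sv sw t"
  let ?r' = "map (\<lambda>x. (sv c (fst x), snd x)) ?r"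
  have "tscale c t = sum_list (map (\<lambda>x. tens sv sw (fst x) (snd x)) ?r')"
    by (subst rep_spec(2)[OF t]) (simp add: split_def tscale_sum_list o_def tens_scale1)
  moreover have "set ?r' \<subseteq> C \<times> D" using rep_spec(1)[OF t] C unfolding subsp_def by auto
  ultimately have "tlift C D sv sw \<beta> (tscale c t) = sum_list (map (\<lambda>x. \<beta> (fst x) (snd x)) ?r')"
    using tlift_sum_list[OF vsv vsw su C D bl, of "?r'"] by simp
  also have "\<dots> = sum_list (map (\<lambda>x. su c (\<beta> (fst x) (snd x))) ?r)"
  proof -
    have "\<beta> (sv c (fst x)) (snd x) = su c (\<beta> (fst x) (snd x))" if "x \<in> set ?r" for x
      using rep_spec(1)[OF t] that by (intro bilinD(2)[OF bl]) auto
    then show ?thesis by (simp add: o_def cong: map_cong)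
  qed
  also have "\<dots> = su c (tlift C D sv sw \<beta> t)"
    unfolding tlift_rep using su
    by (subst sum_list_additive[of "su c"]) (auto simp: o_def vsD)
  finally show ?thesis .
qed

lemma tlift_lin:
  assumes su: "vector_space su" and bl: "bilin_on C D sv sw su \<beta>"
  shows "lin_on (tspace C D sv sw) tscale su (tlift C D sv sw \<beta>)"
  unfolding lin_on_def using tlift_add[OF su bl] tlift_scale[OF su bl] by blast

lemma tlift_comp:
  assumes su: "vector_space su" and bl: "bilin_on C D sv sw su \<beta>"
    and t: "t \<in> tspace C' D' sv' sw'" and g: "\<And>a b. a \<in> C' \<Longrightarrow> b \<in> D' \<Longrightarrow> \<gamma> a b \<in> tspace C D sv sw"
  shows "tlift C D sv sw \<beta> (tlift C' D' sv' sw' \<gamma> t) = tlift C' D' sv' sw' (\<lambda>a b. tlift C D sv sw \<beta> (\<gamma> a b)) t"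
  by (rule tlift_additive_on[OF tlift_add[OF su bl] tlift_zero[OF su bl] tspace_add tspace_zero t g])

lemma tlift_tspace:
  assumes t: "t \<in> tspace C' D' sv' sw'" and g: "\<And>a b. a \<in> C' \<Longrightarrow> b \<in> D' \<Longrightarrow> \<gamma> a b \<in> tspace C D sv sw"
  shows "tlift C' D' sv' sw' \<gamma> t \<in> tspace C D sv sw"
  by (rule tlift_in_closed[OF tspace_add tspace_zero t g])

end

lemma tlift_in_subsp:
  assumes M: "subsp M s" and t: "t \<in> tspace C D sv sw" and g: "\<And>a b. a \<in> C \<Longrightarrow> b \<in> D \<Longrightarrow> \<gamma> a b \<in> M"
  shows "tlift C D sv sw \<gamma> t \<in> M"
  by (rule tlift_in_closed[OF subspD(2)[OF M] subspD(1)[OF M] t g])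

lemma tlift_scale_fun:
  assumes su: "vector_space su"
  shows "tlift C D sv sw (\<lambda>a b. su c (\<gamma> a b)) t = su c (tlift C D sv sw \<gamma> t)"
  using su by (subst tlift_additive[of "su c"]) (auto simp: vsD)

lemma lin_on_tlift_fun:
  assumes su: "vector_space su" and t: "t \<in> tspace C D sv sw"
    and F: "\<And>u v. u \<in> C \<Longrightarrow> v \<in> D \<Longrightarrow> lin_on M s1 su (\<lambda>x. F x u v)"
  shows "lin_on M s1 su (\<lambda>x. tlift C D sv sw (\<lambda>u v. F x u v) t)"
  unfolding lin_on_def
proof safe
  fix x y assume "x \<in> M" "y \<in> M"
  then show "tlift C D sv sw (\<lambda>u v. F (x + y) u v) t = tlift C D sv sw (\<lambda>u v. F x u v) t + tlift C D sv sw (\<lambda>u v. F y u v) t"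
    using F unfolding lin_on_def by (subst tlift_add_fun[symmetric], intro tlift_cong[OF t]) auto
next
  fix c x assume "x \<in> M"
  then show "tlift C D sv sw (\<lambda>u v. F (s1 c x) u v) t = su c (tlift C D sv sw (\<lambda>u v. F x u v) t)"
    using F unfolding lin_on_def by (subst tlift_scale_fun[OF su, symmetric], intro tlift_cong[OF t]) auto
qed

lemma lin_on_tlift_fun_UNIV:
  assumes su: "vector_space su"
    and F: "\<And>u v. lin_on M s1 su (\<lambda>x. F x u v)"
  shows "lin_on M s1 su (\<lambda>x. tlift UNIV UNIV sv sw (\<lambda>u v. F x u v) t)"
  unfolding lin_on_def
proof safe
  fix x y assume "x \<in> M" "y \<in> M"
  then show "tlift UNIV UNIV sv sw (\<lambda>u v. F (x + y) u v) t = tlift UNIV UNIV sv sw (\<lambda>u v. F x u v) t + tlift UNIV UNIV sv sw (\<lambda>u v. F y u v) t"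
  proof -
    have "(\<lambda>u v. F (x + y) u v) = (\<lambda>u v. F x u v + F y u v)" using F \<open>x \<in> M\<close> \<open>y \<in> M\<close> unfolding lin_on_def by auto
    then show ?thesis by (simp add: tlift_add_fun)
  qed
next
  fix c x assume "x \<in> M"
  then show "tlift UNIV UNIV sv sw (\<lambda>u v. F (s1 c x) u v) t = su c (tlift UNIV UNIV sv sw (\<lambda>u v. F x u v) t)"
  proof -
    have "(\<lambda>u v. F (s1 c x) u v) = (\<lambda>u v. su c (F x u v))" using F \<open>x \<in> M\<close> unfolding lin_on_def by auto
    then show ?thesis by (simp add: tlift_scale_fun[OF su])
  qed
qed


definition tri_on where
  "tri_on C1 C2 C3 s1 s2 s3 su \<beta> \<longleftrightarrow>
     (\<forall>w\<in>C3. bilin_on C1 C2 s1 s2 su (\<lambda>u v. \<beta> u v w)) \<and> (\<forall>u\<in>C1. \<forall>v\<in>C2. lin_on C3 s3 su (\<beta> u v))"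

lemma lin_onD: "lin_on C s1 s2 f \<Longrightarrow> x \<in> C \<Longrightarrow> y \<in> C \<Longrightarrow> f (x + y) = f x + f y"
  "lin_on C s1 s2 f \<Longrightarrow> x \<in> C \<Longrightarrow> f (s1 c x) = s2 c (f x)"
  unfolding lin_on_def by auto

lemma lin_onI: "(\<And>x y. x \<in> C \<Longrightarrow> y \<in> C \<Longrightarrow> f (x + y) = f x + f y) \<Longrightarrow> (\<And>c x. x \<in> C \<Longrightarrow> f (s1 c x) = s2 c (f x))
  \<Longrightarrow> lin_on C s1 s2 f"
  unfolding lin_on_def by auto

lemma bilin_onI2: "(\<And>w. w \<in> D \<Longrightarrow> lin_on C s1 s3 (\<lambda>v. \<beta> v w)) \<Longrightarrow> (\<And>v. v \<in> C \<Longrightarrow> lin_on D s2 s3 (\<lambda>w. \<beta> v w))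
  \<Longrightarrow> bilin_on C D s1 s2 s3 \<beta>"
  unfolding bilin_on_def by auto

lemma bilin_onD2: "bilin_on C D s1 s2 s3 \<beta> \<Longrightarrow> w \<in> D \<Longrightarrow> lin_on C s1 s3 (\<lambda>v. \<beta> v w)"
  "bilin_on C D s1 s2 s3 \<beta> \<Longrightarrow> v \<in> C \<Longrightarrow> lin_on D s2 s3 (\<lambda>w. \<beta> v w)"
  unfolding bilin_on_def by auto

lemma tri_onI: "(\<And>w. w \<in> C3 \<Longrightarrow> bilin_on C1 C2 s1 s2 su (\<lambda>u v. \<beta> u v w)) \<Longrightarrow>
   (\<And>u v. u \<in> C1 \<Longrightarrow> v \<in> C2 \<Longrightarrow> lin_on C3 s3 su (\<lambda>w. \<beta> u v w)) \<Longrightarrow> tri_on C1 C2 C3 s1 s2 s3 su \<beta>"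
  unfolding tri_on_def by auto

lemma tri_onD: "tri_on C1 C2 C3 s1 s2 s3 su \<beta> \<Longrightarrow> w \<in> C3 \<Longrightarrow> bilin_on C1 C2 s1 s2 su (\<lambda>u v. \<beta> u v w)"
  "tri_on C1 C2 C3 s1 s2 s3 su \<beta> \<Longrightarrow> u \<in> C1 \<Longrightarrow> v \<in> C2 \<Longrightarrow> lin_on C3 s3 su (\<lambda>w. \<beta> u v w)"
  unfolding tri_on_def by auto

lemma tlift_lin_on:
  assumes C: "subsp C sv" and D: "subsp D sw" and su: "vector_space su" and bl: "bilin_on C D sv sw su \<beta>"
  shows "lin_on (tspace C D sv sw) tscale su (\<lambda>t. tlift C D sv sw \<beta> t)"
  using tctx.tlift_lin[OF tctx.intro[OF C D] su bl] by simp


lemma tens_in_tspace_fun: "tens s1 s2 u v \<in> tspace UNIV UNIV s1 s2"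
  by (rule tspace_tens) auto

context
  fixes C :: "'v::ab_group_add set" and D :: "'w::ab_group_add set"
    and sv :: "'k::field \<Rightarrow> 'v \<Rightarrow> 'v" and sw :: "'k \<Rightarrow> 'w \<Rightarrow> 'w"
    and C' :: "'v2::ab_group_add set" and D' :: "'w2::ab_group_add set"
    and sv' :: "'k::field \<Rightarrow> 'v2 \<Rightarrow> 'v2" and sw' :: "'k \<Rightarrow> 'w2 \<Rightarrow> 'w2"
  assumes C: "subsp C sv" and D: "subsp D sw" and C': "subsp C' sv'" and D': "subsp D' sw'"
begin

interpretation t1: tctx C D sv sw using C D by (rule tctx.intro)
interpretation t2: tctx C' D' sv' sw' using C' D' by (rule tctx.intro)

lemma tmap_tspace:
  assumes f: "\<And>v. v \<in> C \<Longrightarrow> f v \<in> C'" and g: "\<And>w. w \<in> D \<Longrightarrow> g w \<in> D'" and t: "t \<in> tspace C D sv sw"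
  shows "tmap C D sv sw sv' sw' f g t \<in> tspace C' D' sv' sw'"
  unfolding tmap_def by (rule t2.tlift_tspace[OF t]) (intro tspace_tens f g)

lemma tmap_tlift:
  assumes su: "vector_space su" and bl: "bilin_on C' D' sv' sw' su \<beta>"
    and f: "\<And>v. v \<in> C \<Longrightarrow> f v \<in> C'" and g: "\<And>w. w \<in> D \<Longrightarrow> g w \<in> D'" and t: "t \<in> tspace C D sv sw"
  shows "tlift C' D' sv' sw' \<beta> (tmap C D sv sw sv' sw' f g t) = tlift C D sv sw (\<lambda>v w. \<beta> (f v) (g w)) t"
  unfolding tmap_def
  by (subst t2.tlift_comp[OF su bl t], rule tspace_tens[OF f g], assumption+,
      rule tlift_cong[OF t], rule t2.tlift_tens[OF su bl f g])
end

context
  fixes C :: "'v::ab_group_add set" and D :: "'w::ab_group_add set"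
    and sv :: "'k::field \<Rightarrow> 'v \<Rightarrow> 'v" and sw :: "'k \<Rightarrow> 'w \<Rightarrow> 'w"
  assumes C: "subsp C sv" and D: "subsp D sw"
begin

interpretation t1: tctx C D sv sw using C D by (rule tctx.intro)

lemma tmult_tspace:
  assumes mv: "\<And>a b. a \<in> C \<Longrightarrow> b \<in> C \<Longrightarrow> mv a b \<in> C" and mw: "\<And>a b. a \<in> D \<Longrightarrow> b \<in> D \<Longrightarrow> mw a b \<in> D"
    and x: "x \<in> tspace C D sv sw" and y: "y \<in> tspace C D sv sw"
  shows "tmult C D sv sw mv mw x y \<in> tspace C D sv sw"
  unfolding tmult_def by (intro t1.tlift_tspace[OF x] t1.tlift_tspace[OF y] tspace_tens mv mw)

lemma tmult_tlift:
  assumes su: "vector_space su" and bl: "bilin_on C D sv sw su \<beta>"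
    and mv: "\<And>a b. a \<in> C \<Longrightarrow> b \<in> C \<Longrightarrow> mv a b \<in> C" and mw: "\<And>a b. a \<in> D \<Longrightarrow> b \<in> D \<Longrightarrow> mw a b \<in> D"
    and x: "x \<in> tspace C D sv sw" and y: "y \<in> tspace C D sv sw"
  shows "tlift C D sv sw \<beta> (tmult C D sv sw mv mw x y)
       = tlift C D sv sw (\<lambda>a b. tlift C D sv sw (\<lambda>c d. \<beta> (mv a c) (mw b d)) y) x"
  unfolding tmult_def
  apply (subst t1.tlift_comp[OF su bl x])
   apply (intro t1.tlift_tspace[OF y] tspace_tens mv mw; assumption)
  apply (rule tlift_cong[OF x])
  apply (subst t1.tlift_comp[OF su bl y])
   apply (intro tspace_tens mv mw; assumption)
  apply (rule tlift_cong[OF y])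
  apply (rule t1.tlift_tens[OF su bl]; intro mv mw; assumption)
  done

end


lemma tens_zero1: "tens sv sw 0 w = 0"
  using tens_add1[of sv sw 0 0 w] by simp

lemma tens_zero2: "tens sv sw v 0 = 0"
  using tens_add2[of sv sw v 0 0] by simp

definition ev3 where
  "ev3 C1 C2 C3 s1 s2 s3 \<beta> X = tlift C1 (tspace C2 C3 s2 s3) s1 tscale (\<lambda>u x. tlift C2 C3 s2 s3 (\<lambda>v w. \<beta> u v w) x) X"

context
  fixes C1 :: "'v1::ab_group_add set" and C2 :: "'v2::ab_group_add set" and C3 :: "'v3::ab_group_add set"
    and s1 :: "'k::field \<Rightarrow> 'v1 \<Rightarrow> 'v1" and s2 :: "'k \<Rightarrow> 'v2 \<Rightarrow> 'v2" and s3 :: "'k \<Rightarrow> 'v3 \<Rightarrow> 'v3"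
  assumes C1: "subsp C1 s1" and C2: "subsp C2 s2" and C3: "subsp C3 s3"
begin

interpretation t23: tctx C2 C3 s2 s3 using C2 C3 by (rule tctx.intro)
interpretation t12: tctx C1 C2 s1 s2 using C1 C2 by (rule tctx.intro)
interpretation t1_23: tctx C1 "tspace C2 C3 s2 s3" s1 tscale using C1 subsp_tspace[OF C2] by (rule tctx.intro)
interpretation t12_3: tctx "tspace C1 C2 s1 s2" C3 tscale s3 using subsp_tspace[OF C1] C3 by (rule tctx.intro)

lemma tri_bilin23: "tri_on C1 C2 C3 s1 s2 s3 su \<beta> \<Longrightarrow> u \<in> C1 \<Longrightarrow> bilin_on C2 C3 s2 s3 su (\<lambda>v w. \<beta> u v w)"
  by (rule bilin_onI2) (auto dest: tri_onD bilin_onD2)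

lemma tri_bilin12: "tri_on C1 C2 C3 s1 s2 s3 su \<beta> \<Longrightarrow> w \<in> C3 \<Longrightarrow> bilin_on C1 C2 s1 s2 su (\<lambda>u v. \<beta> u v w)"
  by (auto dest: tri_onD)

lemma ev3_kernel_bilin:
  assumes su: "vector_space su" and tri: "tri_on C1 C2 C3 s1 s2 s3 su \<beta>"
  shows "bilin_on C1 (tspace C2 C3 s2 s3) s1 tscale su (\<lambda>u x. tlift C2 C3 s2 s3 (\<lambda>v w. \<beta> u v w) x)"
proof (rule bilin_onI2)
  fix x assume x: "x \<in> tspace C2 C3 s2 s3"
  show "lin_on C1 s1 su (\<lambda>u. tlift C2 C3 s2 s3 (\<lambda>v w. \<beta> u v w) x)"
    by (rule lin_on_tlift_fun[OF su x]) (rule bilin_onD2(1)[OF tri_bilin12[OF tri]], assumption+)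
next
  fix u assume u: "u \<in> C1"
  show "lin_on (tspace C2 C3 s2 s3) tscale su (\<lambda>x. tlift C2 C3 s2 s3 (\<lambda>v w. \<beta> u v w) x)"
    by (rule tlift_lin_on[OF C2 C3 su tri_bilin23[OF tri u]])
qed

lemma assoc_kernel_bilin:
  assumes su: "vector_space su" and tri: "tri_on C1 C2 C3 s1 s2 s3 su \<beta>"
  shows "bilin_on (tspace C1 C2 s1 s2) C3 tscale s3 su (\<lambda>x w. tlift C1 C2 s1 s2 (\<lambda>u v. \<beta> u v w) x)"
proof (rule bilin_onI2)
  fix w assume w: "w \<in> C3"
  show "lin_on (tspace C1 C2 s1 s2) tscale su (\<lambda>x. tlift C1 C2 s1 s2 (\<lambda>u v. \<beta> u v w) x)"
    by (rule tlift_lin_on[OF C1 C2 su tri_bilin12[OF tri w]])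
next
  fix x assume x: "x \<in> tspace C1 C2 s1 s2"
  show "lin_on C3 s3 su (\<lambda>w. tlift C1 C2 s1 s2 (\<lambda>u v. \<beta> u v w) x)"
    by (rule lin_on_tlift_fun[OF su x]) (rule tri_onD(2)[OF tri], assumption+)
qed

lemma tens3_tri: "tri_on C1 C2 C3 s1 s2 s3 tscale (\<lambda>u v w. tens s1 tscale u (tens s2 s3 v w))"
proof (rule tri_onI)
  fix w assume w: "w \<in> C3"
  show "bilin_on C1 C2 s1 s2 tscale (\<lambda>u v. tens s1 tscale u (tens s2 s3 v w))"
    by (rule bilinI) (simp_all add: tens_add1 tens_add2 tens_scale1 tens_scale2)
next
  fix u v
  show "lin_on C3 s3 tscale (\<lambda>w. tens s1 tscale u (tens s2 s3 v w))"
    by (rule lin_onI) (simp_all add: tens_add1 tens_add2 tens_scale1 tens_scale2)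
qed

lemma tassoc_tspace:
  assumes t: "t \<in> tspace (tspace C1 C2 s1 s2) C3 tscale s3"
  shows "tassoc C1 C2 C3 s1 s2 s3 t \<in> tspace C1 (tspace C2 C3 s2 s3) s1 tscale"
  unfolding tassoc_def
  by (intro t1_23.tlift_tspace[OF t] t1_23.tlift_tspace tspace_tens; assumption)

lemma tassoc_ev3:
  assumes su: "vector_space su" and tri: "tri_on C1 C2 C3 s1 s2 s3 su \<beta>"
    and t: "t \<in> tspace (tspace C1 C2 s1 s2) C3 tscale s3"
  shows "ev3 C1 C2 C3 s1 s2 s3 \<beta> (tassoc C1 C2 C3 s1 s2 s3 t)
       = tlift (tspace C1 C2 s1 s2) C3 tscale s3 (\<lambda>x w. tlift C1 C2 s1 s2 (\<lambda>u v. \<beta> u v w) x) t"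
  unfolding tassoc_def ev3_def
  apply (subst t1_23.tlift_comp[OF su ev3_kernel_bilin[OF su tri] t])
   apply (intro t1_23.tlift_tspace tspace_tens; assumption)
  apply (rule tlift_cong[OF t])
  apply (subst t1_23.tlift_comp[OF su ev3_kernel_bilin[OF su tri]], assumption)
   apply (intro tspace_tens; assumption)
  apply (rule tlift_cong, assumption)
  apply (subst t1_23.tlift_tens[OF su ev3_kernel_bilin[OF su tri]], assumption)
   apply (intro tspace_tens; assumption)
  apply (rule t23.tlift_tens[OF su tri_bilin23[OF tri]]; assumption)
  done

lemma ev3_tens:
  assumes X: "X \<in> tspace C1 (tspace C2 C3 s2 s3) s1 tscale"
  shows "ev3 C1 C2 C3 s1 s2 s3 (\<lambda>u v w. tens s1 tscale u (tens s2 s3 v w)) X = X"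
proof -
  have "ev3 C1 C2 C3 s1 s2 s3 (\<lambda>u v w. tens s1 tscale u (tens s2 s3 v w)) X
      = tlift C1 (tspace C2 C3 s2 s3) s1 tscale (tens s1 tscale) X"
    unfolding ev3_def
  proof (rule tlift_cong[OF X])
    fix u x assume "x \<in> tspace C2 C3 s2 s3"
    then show "tlift C2 C3 s2 s3 (\<lambda>v w. tens s1 tscale u (tens s2 s3 v w)) x = tens s1 tscale u x"
      by (subst tlift_additive[of "tens s1 tscale u", symmetric])
         (auto simp: tens_add2 tens_zero2 tlift_eta)
  qed
  also have "\<dots> = X" by (rule tlift_eta[OF X])
  finally show ?thesis .
qed

end


locale ctx =
  fixes sh :: "'k::field \<Rightarrow> 'h::ring_1 \<Rightarrow> 'h"
    and sa :: "'k \<Rightarrow> 'a::ring_1 \<Rightarrow> 'a"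
    and \<Delta> :: "'h \<Rightarrow> ('h, 'h, 'k) tensor" and \<epsilon> :: "'h \<Rightarrow> 'k" and S :: "'h \<Rightarrow> 'h"
    and lact :: "'h \<Rightarrow> 'a \<Rightarrow> 'a" and ract :: "'a \<Rightarrow> 'h \<Rightarrow> 'a"
    and psil :: "'a \<Rightarrow> ('h, 'a, 'k) tensor" and psir :: "'a \<Rightarrow> ('a, 'h, 'k) tensor"
  assumes A: "alg UNIV sa (*) 1"
    and H: "hopf UNIV sh (*) 1 \<Delta> \<epsilon> S"
    and Sbij: "bij S"
    and D: "lr_datum sh \<Delta> \<epsilon> sa lact ract psil psir"
begin

lemma bialgH: "bialg UNIV sh (*) 1 \<Delta> \<epsilon>" using H unfolding hopf_def by auto
lemma algH: "alg UNIV sh (*) 1" using bialgH unfolding bialg_def by auto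
lemma coalgH: "coalg UNIV sh \<Delta> \<epsilon>" using bialgH unfolding bialg_def by auto
lemma vsH: "vector_space sh" using algH unfolding alg_def subsp_def by auto
lemma vsA: "vector_space sa" using A unfolding alg_def subsp_def by auto
lemma subH: "subsp UNIV sh" using vsH by (rule subsp_UNIV)
lemma subA: "subsp UNIV sa" using vsA by (rule subsp_UNIV)
lemma vsK: "vector_space ((*) :: 'k \<Rightarrow> 'k \<Rightarrow> 'k)" by (rule vs_field)
lemma vsT: "vector_space (tscale :: 'k \<Rightarrow> ('b \<Rightarrow> 'k) \<Rightarrow> _)" by (rule vs_tscale)

lemma multH_bilin: "bilin_on UNIV UNIV sh sh sh (*)" using algH unfolding alg_def by auto
lemma multA_bilin: "bilin_on UNIV UNIV sa sa sa (*)" using A unfolding alg_def by auto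

lemma sh_mult1: "sh c x * y = sh c (x * y)" and sh_mult2: "x * sh c y = sh c (x * y)"
  using bilinD[OF multH_bilin] by auto
lemma sa_mult1: "sa c x * y = sa c (x * y)" and sa_mult2: "x * sa c y = sa c (x * y)"
  using bilinD[OF multA_bilin] by auto

lemma Delta_tspace: "\<Delta> x \<in> tspace UNIV UNIV sh sh" using coalgH unfolding coalg_def by auto
lemma Delta_lin: "lin_on UNIV sh tscale \<Delta>" using coalgH unfolding coalg_def by auto
lemma eps_lin: "lin_on UNIV sh (*) \<epsilon>" using coalgH unfolding coalg_def by auto
lemma Delta_coassoc: "tassoc UNIV UNIV UNIV sh sh sh (tmap UNIV UNIV sh sh tscale sh \<Delta> id (\<Delta> x))
                = tmap UNIV UNIV sh sh sh tscale id \<Delta> (\<Delta> x)" using coalgH unfolding coalg_def by auto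
lemma Delta_counit: "tlift UNIV UNIV sh sh (\<lambda>a b. sh (\<epsilon> a) b) (\<Delta> x) = x"
   "tlift UNIV UNIV sh sh (\<lambda>a b. sh (\<epsilon> b) a) (\<Delta> x) = x" using coalgH unfolding coalg_def by auto
lemma Delta_mult: "\<Delta> (x * y) = tmult UNIV UNIV sh sh (*) (*) (\<Delta> x) (\<Delta> y)"
  and Delta_one: "\<Delta> 1 = tens sh sh 1 1" and eps_mult: "\<epsilon> (x * y) = \<epsilon> x * \<epsilon> y" and eps_one: "\<epsilon> 1 = 1"
  using bialgH unfolding bialg_def by auto
lemma S_lin: "lin_on UNIV sh sh S" using H unfolding hopf_def by auto
lemma antipode: "tlift UNIV UNIV sh sh (\<lambda>a b. S a * b) (\<Delta> x) = sh (\<epsilon> x) 1"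
   "tlift UNIV UNIV sh sh (\<lambda>a b. a * S b) (\<Delta> x) = sh (\<epsilon> x) 1"
  using H unfolding hopf_def by auto

lemma lmodA: "lmod_alg UNIV sh (*) 1 \<Delta> \<epsilon> UNIV sa (*) 1 lact" using D unfolding lr_datum_def by auto
lemma rmodA: "rmod_alg UNIV sh (*) 1 \<Delta> \<epsilon> UNIV sa (*) 1 ract" using D unfolding lr_datum_def by auto
lemma lr_comm: "ract (lact h a) g = lact h (ract a g)" using D unfolding lr_datum_def by auto
lemma lcomodA: "lcomod_alg UNIV sh (*) 1 \<Delta> \<epsilon> UNIV sa (*) 1 psil" using D unfolding lr_datum_def by auto
lemma rcomodA: "rcomod_alg UNIV sh (*) 1 \<Delta> \<epsilon> UNIV sa (*) 1 psir" using D unfolding lr_datum_def by auto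
lemma bicomod: "tassoc UNIV UNIV UNIV sh sa sh (tmap UNIV UNIV sa sh tscale sh psil id (psir a))
             = tmap UNIV UNIV sh sa sh tscale id psir (psil a)" using D unfolding lr_datum_def by auto
lemma psil_lact: "psil (lact h a) = tmap UNIV UNIV sh sa sh sa id (lact h) (psil a)"
  and psir_lact: "psir (lact h a) = tmap UNIV UNIV sa sh sa sh (lact h) id (psir a)"
  and psil_ract: "psil (ract a h) = tmap UNIV UNIV sh sa sh sa id (\<lambda>b. ract b h) (psil a)"
  and psir_ract: "psir (ract a h) = tmap UNIV UNIV sa sh sa sh (\<lambda>b. ract b h) id (psir a)"
  using D unfolding lr_datum_def by auto

lemma lact_bilin: "bilin_on UNIV UNIV sh sa sa lact" using lmodA unfolding lmod_alg_def by auto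
lemma lact_mult: "lact (x * y) a = lact x (lact y a)" and lact_one: "lact 1 a = a"
  and lact_alg: "lact x (a * b) = tlift UNIV UNIV sh sh (\<lambda>x1 x2. lact x1 a * lact x2 b) (\<Delta> x)"
  and lact_unit: "lact x 1 = sa (\<epsilon> x) 1"
  using lmodA unfolding lmod_alg_def by auto
lemma ract_bilin: "bilin_on UNIV UNIV sa sh sa ract" using rmodA unfolding rmod_alg_def by auto
lemma ract_mult: "ract a (x * y) = ract (ract a x) y" and ract_one: "ract a 1 = a"
  and ract_alg: "ract (a * b) x = tlift UNIV UNIV sh sh (\<lambda>x1 x2. ract a x1 * ract b x2) (\<Delta> x)"
  and ract_unit: "ract 1 x = sa (\<epsilon> x) 1"
  using rmodA unfolding rmod_alg_def by auto

lemma psil_tspace: "psil a \<in> tspace UNIV UNIV sh sa" and psil_lin: "lin_on UNIV sa tscale psil"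
  and psil_coassoc: "tassoc UNIV UNIV UNIV sh sh sa (tmap UNIV UNIV sh sa tscale sa \<Delta> id (psil a))
                = tmap UNIV UNIV sh sa sh tscale id psil (psil a)"
  and psil_counit: "tlift UNIV UNIV sh sa (\<lambda>x b. sa (\<epsilon> x) b) (psil a) = a"
  and psil_mult: "psil (a * b) = tmult UNIV UNIV sh sa (*) (*) (psil a) (psil b)"
  and psil_one: "psil 1 = tens sh sa 1 1"
  using lcomodA unfolding lcomod_alg_def by auto

lemma psir_tspace: "psir a \<in> tspace UNIV UNIV sa sh" and psir_lin: "lin_on UNIV sa tscale psir"
  and psir_coassoc: "tassoc UNIV UNIV UNIV sa sh sh (tmap UNIV UNIV sa sh tscale sh psir id (psir a))
                = tmap UNIV UNIV sa sh sa tscale id \<Delta> (psir a)"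
  and psir_counit: "tlift UNIV UNIV sa sh (\<lambda>b x. sa (\<epsilon> x) b) (psir a) = a"
  and psir_mult: "psir (a * b) = tmult UNIV UNIV sa sh (*) (*) (psir a) (psir b)"
  and psir_one: "psir 1 = tens sa sh 1 1"
  using rcomodA unfolding rcomod_alg_def by auto

end


named_theorems linr

lemma lin_id[linr]: "lin_on M s s (\<lambda>x. x)" by (rule lin_onI) auto

lemma lin_tens1[linr]: "lin_on M s1 sv f \<Longrightarrow> lin_on M s1 tscale (\<lambda>x. tens sv sw (f x) w)"
  by (rule lin_onI) (auto simp: lin_onD tens_add1 tens_scale1)
lemma lin_tens2[linr]: "lin_on M s1 sw f \<Longrightarrow> lin_on M s1 tscale (\<lambda>x. tens sv sw v (f x))"
  by (rule lin_onI) (auto simp: lin_onD tens_add2 tens_scale2)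
lemma lin_scale_const[linr]: "vector_space s2 \<Longrightarrow> lin_on M s1 s2 f \<Longrightarrow> lin_on M s1 s2 (\<lambda>x. s2 c (f x))"
  by (rule lin_onI) (auto simp: lin_onD vsD mult.commute)
lemma lin_scale_scalar[linr]: "vector_space s2 \<Longrightarrow> lin_on M s1 (*) f \<Longrightarrow> lin_on M s1 s2 (\<lambda>x. s2 (f x) v)"
  by (rule lin_onI) (auto simp: lin_onD vsD)
lemma lin_kmult1[linr]: "lin_on M s1 (*) f \<Longrightarrow> lin_on M s1 (*) (\<lambda>x. f x * (c::'k::field))"
  by (rule lin_onI) (auto simp: lin_onD algebra_simps)
lemma lin_kmult2[linr]: "lin_on M s1 (*) f \<Longrightarrow> lin_on M s1 (*) (\<lambda>x. (c::'k::field) * f x)"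
  by (rule lin_onI) (auto simp: lin_onD algebra_simps)
lemma lin_add[linr]: "vector_space s2 \<Longrightarrow> lin_on M s1 s2 f \<Longrightarrow> lin_on M s1 s2 g \<Longrightarrow> lin_on M s1 s2 (\<lambda>x. f x + g x)"
  by (rule lin_onI) (auto simp: lin_onD vsD algebra_simps)
lemma lin_tlift_fun[linr]: "vector_space su \<Longrightarrow> (\<And>u v. lin_on M s1 su (\<lambda>x. F x u v))
  \<Longrightarrow> lin_on M s1 su (\<lambda>x. tlift UNIV UNIV sv sw (\<lambda>u v. F x u v) t)"
  by (rule lin_on_tlift_fun_UNIV)

lemma bilin_UNIV_I[linr]: "(\<And>w. lin_on UNIV s1 s3 (\<lambda>v. \<beta> v w)) \<Longrightarrow> (\<And>v. lin_on UNIV s2 s3 (\<lambda>w. \<beta> v w))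
  \<Longrightarrow> bilin_on UNIV UNIV s1 s2 s3 \<beta>"
  by (rule bilin_onI2) auto
lemma tri_UNIV_I[linr]: "(\<And>w. bilin_on UNIV UNIV s1 s2 su (\<lambda>u v. \<beta> u v w)) \<Longrightarrow> (\<And>u v. lin_on UNIV s3 su (\<lambda>w. \<beta> u v w))
  \<Longrightarrow> tri_on UNIV UNIV UNIV s1 s2 s3 su \<beta>"
  by (rule tri_onI) auto

context ctx begin

lemmas [linr] = vsH vsA vsK vsT subH subA

lemma lin_hmult1[linr]: "lin_on M s1 sh f \<Longrightarrow> lin_on M s1 sh (\<lambda>x. f x * c)"
  by (rule lin_onI) (auto simp: lin_onD algebra_simps sh_mult1)
lemma lin_hmult2[linr]: "lin_on M s1 sh f \<Longrightarrow> lin_on M s1 sh (\<lambda>x. c * f x)"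
  by (rule lin_onI) (auto simp: lin_onD algebra_simps sh_mult2)
lemma lin_amult1[linr]: "lin_on M s1 sa f \<Longrightarrow> lin_on M s1 sa (\<lambda>x. f x * c)"
  by (rule lin_onI) (auto simp: lin_onD algebra_simps sa_mult1)
lemma lin_amult2[linr]: "lin_on M s1 sa f \<Longrightarrow> lin_on M s1 sa (\<lambda>x. c * f x)"
  by (rule lin_onI) (auto simp: lin_onD algebra_simps sa_mult2)
lemma lin_S[linr]: "lin_on M s1 sh f \<Longrightarrow> lin_on M s1 sh (\<lambda>x. S (f x))"
  using S_lin by (intro lin_onI) (auto simp: lin_onD)
lemma lin_eps[linr]: "lin_on M s1 sh f \<Longrightarrow> lin_on M s1 (*) (\<lambda>x. \<epsilon> (f x))"
  using eps_lin by (intro lin_onI) (auto simp: lin_onD)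
lemma lin_lact1[linr]: "lin_on M s1 sh f \<Longrightarrow> lin_on M s1 sa (\<lambda>x. lact (f x) a)"
  by (rule lin_onI) (auto simp: lin_onD bilinD[OF lact_bilin])
lemma lin_lact2[linr]: "lin_on M s1 sa f \<Longrightarrow> lin_on M s1 sa (\<lambda>x. lact h (f x))"
  by (rule lin_onI) (auto simp: lin_onD bilinD[OF lact_bilin])
lemma lin_ract1[linr]: "lin_on M s1 sa f \<Longrightarrow> lin_on M s1 sa (\<lambda>x. ract (f x) h)"
  by (rule lin_onI) (auto simp: lin_onD bilinD[OF ract_bilin])
lemma lin_ract2[linr]: "lin_on M s1 sh f \<Longrightarrow> lin_on M s1 sa (\<lambda>x. ract a (f x))"
  by (rule lin_onI) (auto simp: lin_onD bilinD[OF ract_bilin])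

end

sublocale ctx \<subseteq> tHH: tctx UNIV UNIV sh sh by (intro tctx.intro subH subA)
sublocale ctx \<subseteq> tHA: tctx UNIV UNIV sh sa by (intro tctx.intro subH subA)
sublocale ctx \<subseteq> tAH: tctx UNIV UNIV sa sh by (intro tctx.intro subH subA)

context ctx begin

lemma lin_Delta_T[linr]: "vector_space su \<Longrightarrow> bilin_on UNIV UNIV sh sh su \<beta> \<Longrightarrow> lin_on M s1 sh f
  \<Longrightarrow> lin_on M s1 su (\<lambda>x. tlift UNIV UNIV sh sh \<beta> (\<Delta> (f x)))"
  by (rule lin_onI) (auto simp: lin_onD[OF Delta_lin] lin_onD tHH.tlift_add tHH.tlift_scale Delta_tspace)
lemma lin_psil_T[linr]: "vector_space su \<Longrightarrow> bilin_on UNIV UNIV sh sa su \<beta> \<Longrightarrow> lin_on M s1 sa f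
  \<Longrightarrow> lin_on M s1 su (\<lambda>x. tlift UNIV UNIV sh sa \<beta> (psil (f x)))"
  by (rule lin_onI) (auto simp: lin_onD[OF psil_lin] lin_onD tHA.tlift_add tHA.tlift_scale psil_tspace)
lemma lin_psir_T[linr]: "vector_space su \<Longrightarrow> bilin_on UNIV UNIV sa sh su \<beta> \<Longrightarrow> lin_on M s1 sa f
  \<Longrightarrow> lin_on M s1 su (\<lambda>x. tlift UNIV UNIV sa sh \<beta> (psir (f x)))"
  by (rule lin_onI) (auto simp: lin_onD[OF psir_lin] lin_onD tHA.tlift_add tAH.tlift_scale tAH.tlift_add psir_tspace)


end


lemma lin_on_zero: "lin_on UNIV s1 s2 f \<Longrightarrow> f 0 = 0"
  using lin_onD(1)[of UNIV s1 s2 f 0 0] by simp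

lemma tlift_lin_pull: "lin_on UNIV s1 s2 f \<Longrightarrow> f (tlift C D sv sw \<beta> t) = tlift C D sv sw (\<lambda>a b. f (\<beta> a b)) t"
  by (rule tlift_additive) (auto simp: lin_onD lin_on_zero)

context
  fixes C1 :: "'v1::ab_group_add set" and C2 :: "'v2::ab_group_add set" and C3 :: "'v3::ab_group_add set"
    and s1 :: "'k::field \<Rightarrow> 'v1 \<Rightarrow> 'v1" and s2 :: "'k \<Rightarrow> 'v2 \<Rightarrow> 'v2" and s3 :: "'k \<Rightarrow> 'v3 \<Rightarrow> 'v3"
    and P :: "'p::ab_group_add set" and sp :: "'k \<Rightarrow> 'p \<Rightarrow> 'p"
  assumes C1: "subsp C1 s1" and C2: "subsp C2 s2" and C3: "subsp C3 s3" and P: "subsp P sp"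
begin

lemma ev3_tassoc_tmap:
  assumes su: "vector_space su" and tri: "tri_on C1 C2 C3 s1 s2 s3 su \<beta>"
    and t: "t \<in> tspace P C3 sp s3" and f: "\<And>p. p \<in> P \<Longrightarrow> f p \<in> tspace C1 C2 s1 s2"
  shows "ev3 C1 C2 C3 s1 s2 s3 \<beta> (tassoc C1 C2 C3 s1 s2 s3 (tmap P C3 sp s3 tscale s3 f id t))
       = tlift P C3 sp s3 (\<lambda>p w. tlift C1 C2 s1 s2 (\<lambda>u v. \<beta> u v w) (f p)) t"
  apply (subst tassoc_ev3[OF C1 C2 C3 su tri])
   apply (rule tmap_tspace[OF P C3 subsp_tspace[OF C1] C3 f _ t]; simp)
  apply (subst tmap_tlift[OF P C3 subsp_tspace[OF C1] C3 su assoc_kernel_bilin[OF C1 C2 C3 su tri] f _ t])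
   apply simp_all
  done

lemma ev3_tmap:
  assumes su: "vector_space su" and tri: "tri_on C1 C2 C3 s1 s2 s3 su \<beta>"
    and t: "t \<in> tspace C1 P s1 sp" and g: "\<And>p. p \<in> P \<Longrightarrow> g p \<in> tspace C2 C3 s2 s3"
  shows "ev3 C1 C2 C3 s1 s2 s3 \<beta> (tmap C1 P s1 sp s1 tscale id g t)
       = tlift C1 P s1 sp (\<lambda>u p. tlift C2 C3 s2 s3 (\<lambda>v w. \<beta> u v w) (g p)) t"
  unfolding ev3_def
  by (subst tmap_tlift[OF C1 P C1 subsp_tspace[OF C2] su ev3_kernel_bilin[OF C1 C2 C3 su tri] _ g t]) simp_all

end

context ctx begin

lemma Hcoassoc:
  assumes su: "vector_space su" and tri: "tri_on UNIV UNIV UNIV sh sh sh su \<beta>"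
  shows "tlift UNIV UNIV sh sh (\<lambda>x y. tlift UNIV UNIV sh sh (\<lambda>u v. \<beta> u v y) (\<Delta> x)) (\<Delta> h)
       = tlift UNIV UNIV sh sh (\<lambda>x y. tlift UNIV UNIV sh sh (\<lambda>u v. \<beta> x u v) (\<Delta> y)) (\<Delta> h)"
  using arg_cong[OF Delta_coassoc[of h], of "ev3 UNIV UNIV UNIV sh sh sh \<beta>"]
  by (simp add: ev3_tassoc_tmap[OF subH subH subH subH su tri Delta_tspace Delta_tspace]
        ev3_tmap[OF subH subH subH subH su tri Delta_tspace Delta_tspace])

lemma psil_coassoc_sw:
  assumes su: "vector_space su" and tri: "tri_on UNIV UNIV UNIV sh sh sa su \<beta>"
  shows "tlift UNIV UNIV sh sa (\<lambda>x b. tlift UNIV UNIV sh sh (\<lambda>u v. \<beta> u v b) (\<Delta> x)) (psil a)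
       = tlift UNIV UNIV sh sa (\<lambda>x b. tlift UNIV UNIV sh sa (\<lambda>u c. \<beta> x u c) (psil b)) (psil a)"
  using arg_cong[OF psil_coassoc[of a], of "ev3 UNIV UNIV UNIV sh sh sa \<beta>"]
  by (simp add: ev3_tassoc_tmap[OF subH subH subA subH su tri psil_tspace Delta_tspace]
        ev3_tmap[OF subH subH subA subA su tri psil_tspace psil_tspace])

lemma psir_coassoc_sw:
  assumes su: "vector_space su" and tri: "tri_on UNIV UNIV UNIV sa sh sh su \<beta>"
  shows "tlift UNIV UNIV sa sh (\<lambda>b x. tlift UNIV UNIV sa sh (\<lambda>c u. \<beta> c u x) (psir b)) (psir a)
       = tlift UNIV UNIV sa sh (\<lambda>b x. tlift UNIV UNIV sh sh (\<lambda>u v. \<beta> b u v) (\<Delta> x)) (psir a)"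
  using arg_cong[OF psir_coassoc[of a], of "ev3 UNIV UNIV UNIV sa sh sh \<beta>"]
  by (simp add: ev3_tassoc_tmap[OF subA subH subH subA su tri psir_tspace psir_tspace]
        ev3_tmap[OF subA subH subH subH su tri psir_tspace Delta_tspace])

lemma bicomod_sw:
  assumes su: "vector_space su" and tri: "tri_on UNIV UNIV UNIV sh sa sh su \<beta>"
  shows "tlift UNIV UNIV sa sh (\<lambda>b x. tlift UNIV UNIV sh sa (\<lambda>u c. \<beta> u c x) (psil b)) (psir a)
       = tlift UNIV UNIV sh sa (\<lambda>u b. tlift UNIV UNIV sa sh (\<lambda>c x. \<beta> u c x) (psir b)) (psil a)"
  using arg_cong[OF bicomod[of a], of "ev3 UNIV UNIV UNIV sh sa sh \<beta>"]
  by (simp add: ev3_tassoc_tmap[OF subH subA subH subA su tri psir_tspace psil_tspace]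
        ev3_tmap[OF subH subA subH subA su tri psil_tspace psir_tspace])

lemma Hcounit1:
  assumes "lin_on UNIV sh su f"
  shows "tlift UNIV UNIV sh sh (\<lambda>x y. f (sh (\<epsilon> y) x)) (\<Delta> h) = f h"
  using tlift_lin_pull[OF assms, of UNIV UNIV sh sh "\<lambda>a b. sh (\<epsilon> b) a" "\<Delta> h"] Delta_counit(2)[of h] by simp

lemma Hcounit2:
  assumes "lin_on UNIV sh su f"
  shows "tlift UNIV UNIV sh sh (\<lambda>x y. f (sh (\<epsilon> x) y)) (\<Delta> h) = f h"
  using tlift_lin_pull[OF assms, of UNIV UNIV sh sh "\<lambda>a b. sh (\<epsilon> a) b" "\<Delta> h"] Delta_counit(1)[of h] by simp

lemma psil_counit_sw:
  assumes "lin_on UNIV sa su f"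
  shows "tlift UNIV UNIV sh sa (\<lambda>x b. f (sa (\<epsilon> x) b)) (psil a) = f a"
  using tlift_lin_pull[OF assms, of UNIV UNIV sh sa "\<lambda>x b. sa (\<epsilon> x) b" "psil a"] psil_counit[of a] by simp

lemma psir_counit_sw:
  assumes "lin_on UNIV sa su f"
  shows "tlift UNIV UNIV sa sh (\<lambda>b x. f (sa (\<epsilon> x) b)) (psir a) = f a"
  using tlift_lin_pull[OF assms, of UNIV UNIV sa sh "\<lambda>b x. sa (\<epsilon> x) b" "psir a"] psir_counit[of a] by simp

lemma Hmult_sw:
  assumes su: "vector_space su" and bl: "bilin_on UNIV UNIV sh sh su \<beta>"
  shows "tlift UNIV UNIV sh sh \<beta> (\<Delta> (x * y)) = tlift UNIV UNIV sh sh (\<lambda>a b. tlift UNIV UNIV sh sh (\<lambda>c d. \<beta> (a * c) (b * d)) (\<Delta> y)) (\<Delta> x)"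
  unfolding Delta_mult by (rule tmult_tlift[OF subH subH su bl _ _ Delta_tspace Delta_tspace]) auto

lemma Hone_sw:
  assumes su: "vector_space su" and bl: "bilin_on UNIV UNIV sh sh su \<beta>"
  shows "tlift UNIV UNIV sh sh \<beta> (\<Delta> 1) = \<beta> 1 1"
  unfolding Delta_one by (rule tHH.tlift_tens[OF su bl]) auto

lemma psil_mult_sw:
  assumes su: "vector_space su" and bl: "bilin_on UNIV UNIV sh sa su \<beta>"
  shows "tlift UNIV UNIV sh sa \<beta> (psil (a * b)) = tlift UNIV UNIV sh sa (\<lambda>x a1. tlift UNIV UNIV sh sa (\<lambda>y b1. \<beta> (x * y) (a1 * b1)) (psil b)) (psil a)"
  unfolding psil_mult by (rule tmult_tlift[OF subH subA su bl _ _ psil_tspace psil_tspace]) auto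

lemma psir_mult_sw:
  assumes su: "vector_space su" and bl: "bilin_on UNIV UNIV sa sh su \<beta>"
  shows "tlift UNIV UNIV sa sh \<beta> (psir (a * b)) = tlift UNIV UNIV sa sh (\<lambda>a1 x. tlift UNIV UNIV sa sh (\<lambda>b1 y. \<beta> (a1 * b1) (x * y)) (psir b)) (psir a)"
  unfolding psir_mult by (rule tmult_tlift[OF subA subH su bl _ _ psir_tspace psir_tspace]) auto

lemma psil_one_sw:
  assumes su: "vector_space su" and bl: "bilin_on UNIV UNIV sh sa su \<beta>"
  shows "tlift UNIV UNIV sh sa \<beta> (psil 1) = \<beta> 1 1"
  unfolding psil_one by (rule tHA.tlift_tens[OF su bl]) auto

lemma psir_one_sw:
  assumes su: "vector_space su" and bl: "bilin_on UNIV UNIV sa sh su \<beta>"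
  shows "tlift UNIV UNIV sa sh \<beta> (psir 1) = \<beta> 1 1"
  unfolding psir_one by (rule tAH.tlift_tens[OF su bl]) auto

lemma psil_lact_sw:
  assumes su: "vector_space su" and bl: "bilin_on UNIV UNIV sh sa su \<beta>"
  shows "tlift UNIV UNIV sh sa \<beta> (psil (lact h a)) = tlift UNIV UNIV sh sa (\<lambda>x b. \<beta> x (lact h b)) (psil a)"
  unfolding psil_lact by (subst tmap_tlift[OF subH subA subH subA su bl _ _ psil_tspace]) auto
lemma psir_lact_sw:
  assumes su: "vector_space su" and bl: "bilin_on UNIV UNIV sa sh su \<beta>"
  shows "tlift UNIV UNIV sa sh \<beta> (psir (lact h a)) = tlift UNIV UNIV sa sh (\<lambda>b x. \<beta> (lact h b) x) (psir a)"
  unfolding psir_lact by (subst tmap_tlift[OF subA subH subA subH su bl _ _ psir_tspace]) auto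
lemma psil_ract_sw:
  assumes su: "vector_space su" and bl: "bilin_on UNIV UNIV sh sa su \<beta>"
  shows "tlift UNIV UNIV sh sa \<beta> (psil (ract a h)) = tlift UNIV UNIV sh sa (\<lambda>x b. \<beta> x (ract b h)) (psil a)"
  unfolding psil_ract by (subst tmap_tlift[OF subH subA subH subA su bl _ _ psil_tspace]) auto
lemma psir_ract_sw:
  assumes su: "vector_space su" and bl: "bilin_on UNIV UNIV sa sh su \<beta>"
  shows "tlift UNIV UNIV sa sh \<beta> (psir (ract a h)) = tlift UNIV UNIV sa sh (\<lambda>b x. \<beta> (ract b h) x) (psir a)"
  unfolding psir_ract by (subst tmap_tlift[OF subA subH subA subH su bl _ _ psir_tspace]) auto

end


lemma tlift_cong2: "(\<And>a b. \<beta> a b = \<gamma> a b) \<Longrightarrow> tlift C D sv sw \<beta> t = tlift C D sv sw \<gamma> t"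
  by (rule arg_cong[where f="\<lambda>f. tlift C D sv sw f t"]) (simp add: fun_eq_iff)

lemma sw_pull: "lin_on UNIV sx sy f \<Longrightarrow> (\<And>a b. \<gamma> a b = f (\<beta> a b)) \<Longrightarrow> tlift C D sv sw \<gamma> t = f (tlift C D sv sw \<beta> t)"
  using tlift_lin_pull[of sx sy f C D sv sw \<beta> t] tlift_cong2[of \<gamma> "\<lambda>a b. f (\<beta> a b)"] by simp

context ctx begin

abbreviation sw where "sw h \<beta> \<equiv> tlift UNIV UNIV sh sh \<beta> (\<Delta> h)"

lemma S_one: "S 1 = 1"
proof -
  have "sw 1 (\<lambda>a b. S a * b) = S 1 * 1"
    by (rule Hone_sw[OF vsH]) (intro linr)
  then show ?thesis using antipode(1)[of 1] by (simp add: eps_one vsD[OF vsH])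
qed

lemma eps_S: "\<epsilon> (S h) = \<epsilon> h"
proof -
  have "\<epsilon> h = \<epsilon> (sw h (\<lambda>a b. S a * b))"
    using antipode(1)[of h] lin_onD(2)[OF eps_lin, of 1 "\<epsilon> h"] by (simp add: eps_one)
  also have "\<dots> = sw h (\<lambda>a b. \<epsilon> (S (sh (\<epsilon> b) a)))"
    by (rule sw_pull[symmetric, OF eps_lin]) (simp add: eps_mult lin_onD[OF S_lin] lin_onD[OF eps_lin] mult.commute)
  also have "\<dots> = \<epsilon> (S h)"
    by (rule Hcounit1[where su="(*)"]) (intro linr)
  finally show ?thesis by simp
qed

lemma Hcounit1':
  assumes "lin_on UNIV sh su f"
  shows "sw h (\<lambda>x y. su (\<epsilon> y) (f x)) = f h"
  using Hcounit1[OF assms, of h] lin_onD(2)[OF assms] by simp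

lemma Hcounit2':
  assumes "lin_on UNIV sh su f"
  shows "sw h (\<lambda>x y. su (\<epsilon> x) (f y)) = f h"
  using Hcounit2[OF assms, of h] lin_onD(2)[OF assms] by simp

lemma S_scale: "S (sh c x) = sh c (S x)" using lin_onD(2)[OF S_lin] by simp
lemma eps_scale: "\<epsilon> (sh c x) = c * \<epsilon> x" using lin_onD(2)[OF eps_lin] by simp

lemma sw_ap2_pull:
  "sw d (\<lambda>y2 y3. p * (q * y2) * (S y3 * r)) = sh (\<epsilon> d) (p * q * r)"
proof -
  have "sw d (\<lambda>y2 y3. p * (q * y2) * (S y3 * r)) = p * q * sw d (\<lambda>y2 y3. y2 * S y3) * r"
    by (rule sw_pull[where sx=sh and sy=sh]) (intro linr, simp add: mult.assoc)
  also have "\<dots> = sh (\<epsilon> d) (p * q * r)" by (simp add: antipode(2) sh_mult1 sh_mult2)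
  finally show ?thesis .
qed

lemma sw_ap2_pull2: "sw d (\<lambda>u v. p * u * S v) = sh (\<epsilon> d) p"
proof -
  have "sw d (\<lambda>u v. p * u * S v) = p * sw d (\<lambda>u v. u * S v)"
    by (rule sw_pull[where sx=sh and sy=sh]) (intro linr, simp add: mult.assoc)
  then show ?thesis by (simp add: antipode(2) sh_mult2)
qed

lemma S_antimult: "S (x * y) = S y * S x"
proof -
  define E where "E = sw x (\<lambda>a b. sw b (\<lambda>x2 x3. sw y (\<lambda>c d. sw d (\<lambda>y2 y3. S (a * c) * (x2 * y2) * (S y3 * S x3)))))"
  have "E = sw x (\<lambda>a b. sw b (\<lambda>x2 x3. sw y (\<lambda>c d. sh (\<epsilon> d) (S (a * c) * x2 * S x3))))"
    unfolding E_def by (simp add: sw_ap2_pull)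
  also have "\<dots> = sw x (\<lambda>a b. sw b (\<lambda>x2 x3. S (a * y) * x2 * S x3))"
    by (intro tlift_cong2 Hcounit1'[where su=sh]) (intro linr)
  also have "\<dots> = sw x (\<lambda>a b. sh (\<epsilon> b) (S (a * y)))"
    by (intro tlift_cong2 sw_ap2_pull2)
  also have "\<dots> = S (x * y)"
    by (intro Hcounit1'[where su=sh]) (intro linr)
  finally have E1: "E = S (x * y)" .
  have "E = sw x (\<lambda>a x3. sw a (\<lambda>x1 x2. sw y (\<lambda>c d. sw d (\<lambda>y2 y3. S (x1 * c) * (x2 * y2) * (S y3 * S x3)))))"
    unfolding E_def by (rule Hcoassoc[OF vsH, symmetric]) (intro linr)
  also have "\<dots> = sw x (\<lambda>a x3. sw a (\<lambda>x1 x2. sw y (\<lambda>c y3. sw c (\<lambda>y1 y2. S (x1 * y1) * (x2 * y2) * (S y3 * S x3)))))"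
    by (intro tlift_cong2 Hcoassoc[OF vsH, symmetric]) (intro linr)
  also have "\<dots> = sw x (\<lambda>a x3. sw y (\<lambda>c y3. sw a (\<lambda>x1 x2. sw c (\<lambda>y1 y2. S (x1 * y1) * (x2 * y2) * (S y3 * S x3)))))"
    by (intro tlift_cong2 tlift_swap)
  also have "\<dots> = sw x (\<lambda>a x3. sw y (\<lambda>c y3. sw (a * c) (\<lambda>u v. S u * v * (S y3 * S x3))))"
    by (intro tlift_cong2 Hmult_sw[OF vsH, symmetric]) (intro linr)
  also have "\<dots> = sw x (\<lambda>a x3. sw y (\<lambda>c y3. sh (\<epsilon> a) (sh (\<epsilon> c) (S y3 * S x3))))"
  proof (intro tlift_cong2)
    fix a x3 c y3
    have "sw (a * c) (\<lambda>u v. S u * v * (S y3 * S x3)) = sw (a * c) (\<lambda>u v. S u * v) * (S y3 * S x3)"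
      by (rule sw_pull[where sx=sh and sy=sh]) (intro linr, simp)
    then show "sw (a * c) (\<lambda>u v. S u * v * (S y3 * S x3)) = sh (\<epsilon> a) (sh (\<epsilon> c) (S y3 * S x3))"
      by (simp add: antipode(1) eps_mult sh_mult1 vsD[OF vsH])
  qed
  also have "\<dots> = sw x (\<lambda>a x3. sh (\<epsilon> a) (sw y (\<lambda>c y3. sh (\<epsilon> c) (S y3 * S x3))))"
    by (intro tlift_cong2 sw_pull[where sx=sh and sy=sh]) (intro linr, simp)
  also have "\<dots> = sw x (\<lambda>a x3. sh (\<epsilon> a) (S y * S x3))"
    by (intro tlift_cong2 arg_cong[where f="sh _"] Hcounit2'[where su=sh]) (intro linr)
  also have "\<dots> = S y * S x"
    by (intro Hcounit2'[where su=sh]) (intro linr)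
  finally show ?thesis using E1 by simp
qed

end


lemma lin_bilin1: "bilin_on UNIV UNIV s1 s2 s3 \<beta> \<Longrightarrow> lin_on M s0 s1 f \<Longrightarrow> lin_on M s0 s3 (\<lambda>x. \<beta> (f x) c)"
  by (rule lin_onI) (auto simp: lin_onD bilinD)
lemma lin_bilin2: "bilin_on UNIV UNIV s1 s2 s3 \<beta> \<Longrightarrow> lin_on M s0 s2 f \<Longrightarrow> lin_on M s0 s3 (\<lambda>x. \<beta> c (f x))"
  by (rule lin_onI) (auto simp: lin_onD bilinD)

lemma lin_bilin2': "bilin_on UNIV UNIV s1 s2 s3 \<beta> \<Longrightarrow> lin_on UNIV s2 s3 (\<beta> c)"
  by (auto dest: bilin_onD2)

context ctx begin

lemma sw4_i:
  assumes su: "vector_space su"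
    and l1: "\<And>y b c. lin_on UNIV sh su (\<lambda>x. G x y b c)" and l2: "\<And>x b c. lin_on UNIV sh su (\<lambda>y. G x y b c)"
    and l3: "\<And>x y c. lin_on UNIV sh su (\<lambda>b. G x y b c)" and l4: "\<And>x y b. lin_on UNIV sh su (\<lambda>c. G x y b c)"
  shows "sw h (\<lambda>a r. sw r (\<lambda>b c. sw a (\<lambda>x y. G x y b c))) = sw h (\<lambda>x r. sw r (\<lambda>y r'. sw r' (\<lambda>b c. G x y b c)))"
proof -
  have "sw h (\<lambda>a r. sw r (\<lambda>b c. sw a (\<lambda>x y. G x y b c))) = sw h (\<lambda>a r. sw a (\<lambda>x y. sw r (\<lambda>b c. G x y b c)))"
    by (intro tlift_cong2 tlift_swap)
  also have "\<dots> = sw h (\<lambda>x r. sw r (\<lambda>y r'. sw r' (\<lambda>b c. G x y b c)))"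
    by (rule Hcoassoc[OF su]) (intro linr su l1 l2 l3 l4)
  finally show ?thesis .
qed

lemma sw4_ii:
  assumes su: "vector_space su"
    and l1: "\<And>y b c. lin_on UNIV sh su (\<lambda>x. G x y b c)" and l2: "\<And>x b c. lin_on UNIV sh su (\<lambda>y. G x y b c)"
    and l3: "\<And>x y c. lin_on UNIV sh su (\<lambda>b. G x y b c)" and l4: "\<And>x y b. lin_on UNIV sh su (\<lambda>c. G x y b c)"
  shows "sw h (\<lambda>a r. sw r (\<lambda>b c. sw b (\<lambda>x y. G a x y c))) = sw h (\<lambda>a r. sw r (\<lambda>x r'. sw r' (\<lambda>y c. G a x y c)))"
  by (intro tlift_cong2 Hcoassoc[OF su]) (intro linr su l1 l2 l3 l4)

lemma S_anticomult:
  assumes su: "vector_space su" and bl: "bilin_on UNIV UNIV sh sh su \<beta>"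
  shows "sw (S h) \<beta> = sw h (\<lambda>a b. \<beta> (S b) (S a))"
proof -
  have bl1: "lin_on UNIV sh su (\<lambda>v. \<beta> v w)" for w using bl by (auto dest: bilin_onD2)
  have bl2: "lin_on UNIV sh su (\<lambda>w. \<beta> v w)" for v using bl by (auto dest: bilin_onD2)
  define X where "X h1 h2 h3 h4 = sw (S h1) (\<lambda>p q. sw h2 (\<lambda>u v. \<beta> (p * u * S h4) (q * v * S h3)))" for h1 h2 h3 h4
  define E where "E = sw h (\<lambda>h1 r. sw r (\<lambda>h2 r'. sw r' (\<lambda>h3 h4. X h1 h2 h3 h4)))"
  have claim: "sw r (\<lambda>h2 r'. sw r' (\<lambda>h3 h4. sw h2 (\<lambda>u v. \<beta> (p * u * S h4) (q * v * S h3)))) = su (\<epsilon> r) (\<beta> p q)" for r p q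
  proof -
    have "sw r (\<lambda>h2 r'. sw r' (\<lambda>h3 h4. sw h2 (\<lambda>u v. \<beta> (p * u * S h4) (q * v * S h3))))
        = sw r (\<lambda>u r'. sw r' (\<lambda>v r''. sw r'' (\<lambda>h3 h4. \<beta> (p * u * S h4) (q * v * S h3))))"
      by (rule sw4_i[OF su]) (intro linr lin_bilin1[OF bl] lin_bilin2[OF bl] lin_bilin2'[OF bl] su)+
    also have "\<dots> = sw r (\<lambda>u r'. sw r' (\<lambda>b h4. sw b (\<lambda>v h3. \<beta> (p * u * S h4) (q * v * S h3))))"
      by (rule sw4_ii[OF su, symmetric]) (intro linr lin_bilin1[OF bl] lin_bilin2[OF bl] lin_bilin2'[OF bl] su)+
    also have "\<dots> = sw r (\<lambda>u r'. sw r' (\<lambda>b h4. su (\<epsilon> b) (\<beta> (p * u * S h4) q)))"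
    proof (intro tlift_cong2)
      fix u r' b h4
      have "sw b (\<lambda>v h3. \<beta> (p * u * S h4) (q * v * S h3)) = \<beta> (p * u * S h4) (sw b (\<lambda>v h3. q * v * S h3))"
        by (rule sw_pull[where sx=sh and sy=su]) (intro linr lin_bilin1[OF bl] lin_bilin2[OF bl] lin_bilin2'[OF bl] su, simp)
      also have "\<dots> = su (\<epsilon> b) (\<beta> (p * u * S h4) q)"
        using sw_ap2_pull2[where d=b and p=q] lin_onD(2)[OF bl2] by simp
      finally show "sw b (\<lambda>v h3. \<beta> (p * u * S h4) (q * v * S h3)) = su (\<epsilon> b) (\<beta> (p * u * S h4) q)" .
    qed
    also have "\<dots> = sw r (\<lambda>u h4. \<beta> (p * u * S h4) q)"
      by (intro tlift_cong2 Hcounit2'[where su=su]) (intro linr lin_bilin1[OF bl] lin_bilin2[OF bl] lin_bilin2'[OF bl] su)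
    also have "\<dots> = \<beta> (sw r (\<lambda>u h4. p * u * S h4)) q"
      by (rule sw_pull[where sx=sh and sy=su]) (intro linr lin_bilin1[OF bl] lin_bilin2[OF bl] lin_bilin2'[OF bl] su, simp)
    also have "\<dots> = su (\<epsilon> r) (\<beta> p q)"
      using sw_ap2_pull2[where d=r and p=p] lin_onD(2)[OF bl1] by simp
    finally show ?thesis .
  qed
  have "E = sw h (\<lambda>h1 r. su (\<epsilon> r) (sw (S h1) \<beta>))"
    unfolding E_def X_def
  proof (intro tlift_cong2)
    fix h1 r
    have "sw r (\<lambda>h2 r'. sw r' (\<lambda>h3 h4. sw (S h1) (\<lambda>p q. sw h2 (\<lambda>u v. \<beta> (p * u * S h4) (q * v * S h3)))))
        = sw r (\<lambda>h2 r'. sw (S h1) (\<lambda>p q. sw r' (\<lambda>h3 h4. sw h2 (\<lambda>u v. \<beta> (p * u * S h4) (q * v * S h3)))))"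
      by (intro tlift_cong2 tlift_swap)
    also have "\<dots> = sw (S h1) (\<lambda>p q. sw r (\<lambda>h2 r'. sw r' (\<lambda>h3 h4. sw h2 (\<lambda>u v. \<beta> (p * u * S h4) (q * v * S h3)))))"
      by (rule tlift_swap)
    also have "\<dots> = sw (S h1) (\<lambda>p q. su (\<epsilon> r) (\<beta> p q))"
      by (intro tlift_cong2 claim)
    also have "\<dots> = su (\<epsilon> r) (sw (S h1) \<beta>)"
      by (rule tlift_scale_fun[OF su])
    finally show "sw r (\<lambda>h2 r'. sw r' (\<lambda>h3 h4. sw (S h1) (\<lambda>p q. sw h2 (\<lambda>u v. \<beta> (p * u * S h4) (q * v * S h3)))))
        = su (\<epsilon> r) (sw (S h1) \<beta>)" .
  qed
  also have "\<dots> = sw (S h) \<beta>"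
    by (rule Hcounit1'[where su=su]) (intro linr lin_bilin1[OF bl] lin_bilin2[OF bl] lin_bilin2'[OF bl] su)
  finally have E1: "E = sw (S h) \<beta>" .
  have "E = sw h (\<lambda>a r. sw r (\<lambda>h3 h4. sw a (\<lambda>h1 h2. X h1 h2 h3 h4)))"
    unfolding E_def X_def by (rule sw4_i[OF su, symmetric]) (intro linr lin_bilin1[OF bl] lin_bilin2[OF bl] lin_bilin2'[OF bl] su)+
  also have "\<dots> = sw h (\<lambda>a r. sw r (\<lambda>h3 h4. su (\<epsilon> a) (\<beta> (S h4) (S h3))))"
  proof (intro tlift_cong2)
    fix a r h3 h4
    define Y where "Y m n = \<beta> (m * S h4) (n * S h3)" for m n
    have blY: "bilin_on UNIV UNIV sh sh su Y" unfolding Y_def by (intro linr lin_bilin1[OF bl] lin_bilin2[OF bl] lin_bilin2'[OF bl] su)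
    have "sw a (\<lambda>h1 h2. X h1 h2 h3 h4) = sw a (\<lambda>h1 h2. sw (S h1 * h2) Y)"
      unfolding X_def Y_def by (intro tlift_cong2 Hmult_sw[OF su, symmetric]) (intro linr lin_bilin1[OF bl] lin_bilin2[OF bl] lin_bilin2'[OF bl] su)
    also have "\<dots> = sw (sw a (\<lambda>h1 h2. S h1 * h2)) Y"
      by (rule sw_pull[where sx=sh and sy=su and f="\<lambda>z. sw z Y"]) (intro linr blY su, simp)
    also have "\<dots> = su (\<epsilon> a) (Y 1 1)"
      unfolding antipode(1) lin_onD(2)[OF Delta_lin, simplified]
      by (simp add: tHH.tlift_scale[OF su blY] Delta_tspace Hone_sw[OF su blY])
    finally show "sw a (\<lambda>h1 h2. X h1 h2 h3 h4) = su (\<epsilon> a) (\<beta> (S h4) (S h3))" unfolding Y_def by simp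
  qed
  also have "\<dots> = sw h (\<lambda>a r. su (\<epsilon> a) (sw r (\<lambda>h3 h4. \<beta> (S h4) (S h3))))"
    by (intro tlift_cong2 tlift_scale_fun[OF su])
  also have "\<dots> = sw h (\<lambda>a b. \<beta> (S b) (S a))"
    by (rule Hcounit2'[where su=su]) (intro linr lin_bilin1[OF bl] lin_bilin2[OF bl] lin_bilin2'[OF bl] su)
  finally show ?thesis using E1 by simp
qed

end


context ctx begin

abbreviation Si where "Si \<equiv> inv S"

lemma S_Si: "S (Si x) = x" using Sbij by (simp add: bij_def surj_f_inv_f)
lemma Si_S: "Si (S x) = x" using Sbij by (simp add: bij_def inv_f_f)
lemma S_inj: "S x = S y \<Longrightarrow> x = y" using Si_S by metis

lemma Si_lin: "lin_on UNIV sh sh Si"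
proof (rule lin_onI)
  fix x y show "Si (x + y) = Si x + Si y"
    by (rule S_inj) (simp add: S_Si lin_onD(1)[OF S_lin])
next
  fix c x show "Si (sh c x) = sh c (Si x)"
    by (rule S_inj) (simp add: S_Si lin_onD(2)[OF S_lin])
qed

lemma lin_Si[linr]: "lin_on M s1 sh f \<Longrightarrow> lin_on M s1 sh (\<lambda>x. Si (f x))"
  using Si_lin by (intro lin_onI) (auto simp: lin_onD)

lemma Si_one: "Si 1 = 1" by (rule S_inj) (simp add: S_Si S_one)
lemma eps_Si: "\<epsilon> (Si h) = \<epsilon> h" using eps_S[of "Si h"] by (simp add: S_Si)
lemma Si_antimult: "Si (x * y) = Si y * Si x"
  by (rule S_inj) (simp add: S_Si S_antimult)
lemma Si_scale: "Si (sh c x) = sh c (Si x)" using lin_onD(2)[OF Si_lin] by simp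

lemma Si_anticomult:
  assumes su: "vector_space su" and bl: "bilin_on UNIV UNIV sh sh su \<beta>"
  shows "sw (Si h) \<beta> = sw h (\<lambda>a b. \<beta> (Si b) (Si a))"
proof -
  have "sw h (\<lambda>a b. \<beta> (Si b) (Si a)) = sw (S (Si h)) (\<lambda>a b. \<beta> (Si b) (Si a))" by (simp add: S_Si)
  also have "\<dots> = sw (Si h) (\<lambda>a b. \<beta> (Si (S a)) (Si (S b)))"
    by (rule S_anticomult[OF su]) (intro linr lin_bilin1[OF bl] lin_bilin2[OF bl] lin_bilin2'[OF bl] su)
  finally show ?thesis by (simp add: Si_S)
qed

lemma Si_ap1: "sw h (\<lambda>a b. Si b * a) = sh (\<epsilon> h) 1"
proof (rule S_inj)
  have "S (sw h (\<lambda>a b. Si b * a)) = sw h (\<lambda>a b. S (Si b * a))"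
    by (rule tlift_lin_pull[OF S_lin])
  also have "\<dots> = sh (\<epsilon> h) 1" by (simp add: S_antimult S_Si antipode(1))
  finally show "S (sw h (\<lambda>a b. Si b * a)) = S (sh (\<epsilon> h) 1)" by (simp add: S_scale S_one)
qed

lemma Si_ap2: "sw h (\<lambda>a b. b * Si a) = sh (\<epsilon> h) 1"
proof (rule S_inj)
  have "S (sw h (\<lambda>a b. b * Si a)) = sw h (\<lambda>a b. S (b * Si a))"
    by (rule tlift_lin_pull[OF S_lin])
  also have "\<dots> = sh (\<epsilon> h) 1" by (simp add: S_antimult S_Si antipode(2))
  finally show "S (sw h (\<lambda>a b. b * Si a)) = S (sh (\<epsilon> h) 1)" by (simp add: S_scale S_one)
qed

end


lemma tlift_lin_pull': "lin_on UNIV sx sy f \<Longrightarrow> f (tlift C D sv sw \<beta> t) = tlift C D sv sw (\<lambda>a b. f (\<beta> a b)) t"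
  by (rule tlift_lin_pull)

context ctx begin

abbreviation HC where "HC \<equiv> tspace UNIV UNIV sh sh"
abbreviation psi where "psi \<equiv> psi_coact sh sa S psil psir"
abbreviation pia where "pia \<equiv> pi_act sh lact ract"

lemma subHC: "subsp HC tscale" by (rule subsp_tspace[OF subH])

end

sublocale ctx \<subseteq> tKA: tctx "tspace UNIV UNIV sh sh" UNIV tscale sa by (intro tctx.intro subHC subA)

context ctx begin

abbreviation TR where "TR \<equiv> tlift UNIV UNIV sa sh"
abbreviation TL where "TL \<equiv> tlift UNIV UNIV sh sa"

lemma HC_tens: "tens sh sh h g \<in> HC" by (rule tspace_tens) auto

lemma psi_tspace: "psi a \<in> tspace HC UNIV tscale sa"
  unfolding psi_coact_def
  by (intro tlift_in_subsp[OF subsp_tspace[OF subHC]] psir_tspace psil_tspace tspace_tens HC_tens UNIV_I)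

lemma psi_sw:
  assumes su: "vector_space su" and bl: "bilin_on HC UNIV tscale sa su \<beta>"
  shows "tlift HC UNIV tscale sa \<beta> (psi a) = TR (\<lambda>x h'. TL (\<lambda>h b. \<beta> (tens sh sh h (Si h')) b) (psil x)) (psir a)"
  unfolding psi_coact_def
  apply (subst tKA.tlift_comp[OF su bl psir_tspace])
   apply (intro tlift_in_subsp[OF subsp_tspace[OF subHC]] psil_tspace tspace_tens HC_tens UNIV_I)
  apply (intro tlift_cong2)
  apply (subst tKA.tlift_comp[OF su bl psil_tspace])
   apply (intro tspace_tens HC_tens UNIV_I)
  apply (intro tlift_cong2)
  apply (rule tKA.tlift_tens[OF su bl HC_tens UNIV_I])
  done

lemma pia_bilinK: "bilin_on UNIV UNIV sh sh sa (\<lambda>h h'. ract (lact h a) h')" by (intro linr)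

lemma pia_tens: "pia (tens sh sh h g) a = ract (lact h a) g"
  unfolding pi_act_def by (rule tHH.tlift_tens[OF vsA pia_bilinK]) auto

lemma pia_lin1: "lin_on HC tscale sa (\<lambda>X. pia X a)"
  unfolding pi_act_def by (rule tlift_lin_on[OF subH subH vsA pia_bilinK])

lemma pia_lin2: "lin_on UNIV sa sa (\<lambda>a. pia X a)"
  unfolding pi_act_def by (intro linr)

lemma lt_kernel_bilin: "bilin_on HC UNIV tscale sa sa (\<lambda>X c. c * pia X y)"
proof (rule bilin_onI2)
  fix c show "lin_on HC tscale sa (\<lambda>X. c * pia X y)" by (intro lin_amult2 pia_lin1)
next
  fix X show "lin_on UNIV sa sa (\<lambda>c. c * pia X y)" by (intro linr)
qed

lemma lt_sw: "lt_prod HC UNIV tscale sa (*) pia psi x y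
   = TR (\<lambda>x' h'. TL (\<lambda>h b. b * ract (lact h y) (Si h')) (psil x')) (psir x)"
  unfolding lt_prod_def by (simp add: psi_sw[OF vsA lt_kernel_bilin] pia_tens)

abbreviation lam' where "lam' \<equiv> lam sa sh S ract psir"
abbreviation lami where "lami \<equiv> lam_inv sa sh ract psir"

lemma lam_lin: "lin_on UNIV sa sa lam'" unfolding lam_def by (intro linr)
lemma lami_lin: "lin_on UNIV sa sa lami" unfolding lam_inv_def by (intro linr)

lemma lam_one: "lam' 1 = 1"
  unfolding lam_def by (subst psir_one_sw[OF vsA]) (intro linr, simp add: Si_one ract_one)

lemma TR_lam:
  assumes su: "vector_space su" and bl: "bilin_on UNIV UNIV sa sh su \<beta>"
  shows "TR \<beta> (psir (lam' a)) = TR (\<lambda>c' y. sw y (\<lambda>g' g. \<beta> (ract c' (Si g)) g')) (psir a)"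
proof -
  have "TR \<beta> (psir (lam' a)) = TR (\<lambda>c g. TR \<beta> (psir (ract c (Si g)))) (psir a)"
    unfolding lam_def by (rule tlift_lin_pull'[where sx=sa and sy=su]) (intro linr lin_bilin1[OF bl] lin_bilin2[OF bl] lin_bilin2'[OF bl] su)
  also have "\<dots> = TR (\<lambda>c g. TR (\<lambda>c' g'. \<beta> (ract c' (Si g)) g') (psir c)) (psir a)"
    by (intro tlift_cong2 psir_ract_sw[OF su bl])
  also have "\<dots> = TR (\<lambda>c' y. sw y (\<lambda>g' g. \<beta> (ract c' (Si g)) g')) (psir a)"
    by (rule psir_coassoc_sw[OF su]) (intro linr lin_bilin1[OF bl] lin_bilin2[OF bl] lin_bilin2'[OF bl] su)
  finally show ?thesis .
qed

lemma TR_lami: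
  assumes su: "vector_space su" and bl: "bilin_on UNIV UNIV sa sh su \<beta>"
  shows "TR \<beta> (psir (lami a)) = TR (\<lambda>c' y. sw y (\<lambda>g' g. \<beta> (ract c' g) g')) (psir a)"
proof -
  have "TR \<beta> (psir (lami a)) = TR (\<lambda>c g. TR \<beta> (psir (ract c g))) (psir a)"
    unfolding lam_inv_def by (rule tlift_lin_pull'[where sx=sa and sy=su]) (intro linr lin_bilin1[OF bl] lin_bilin2[OF bl] lin_bilin2'[OF bl] su)
  also have "\<dots> = TR (\<lambda>c g. TR (\<lambda>c' g'. \<beta> (ract c' g) g') (psir c)) (psir a)"
    by (intro tlift_cong2 psir_ract_sw[OF su bl])
  also have "\<dots> = TR (\<lambda>c' y. sw y (\<lambda>g' g. \<beta> (ract c' g) g')) (psir a)"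
    by (rule psir_coassoc_sw[OF su]) (intro linr lin_bilin1[OF bl] lin_bilin2[OF bl] lin_bilin2'[OF bl] su)
  finally show ?thesis .
qed

lemma ract_scale2: "ract a (sh c h) = sa c (ract a h)" using bilinD(4)[OF ract_bilin] by simp

lemma lami_lam: "lami (lam' a) = a"
proof -
  have "lami (lam' a) = TR (\<lambda>c' y. sw y (\<lambda>g' g. ract (ract c' (Si g)) g')) (psir a)"
    unfolding lam_inv_def[of sa sh ract psir "lam' a"] by (rule TR_lam[OF vsA]) (intro linr)
  also have "\<dots> = TR (\<lambda>c' y. ract c' (sw y (\<lambda>g' g. Si g * g'))) (psir a)"
    by (intro tlift_cong2 sw_pull[where sx=sh and sy=sa]) (intro linr, simp add: ract_mult)
  also have "\<dots> = TR (\<lambda>c' y. sa (\<epsilon> y) c') (psir a)"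
    by (simp add: Si_ap1 ract_scale2 ract_one)
  also have "\<dots> = a" using psir_counit .
  finally show ?thesis .
qed

lemma lam_lami: "lam' (lami a) = a"
proof -
  have "lam' (lami a) = TR (\<lambda>c' y. sw y (\<lambda>g' g. ract (ract c' g) (Si g'))) (psir a)"
    unfolding lam_def[of sa sh S ract psir "lami a"] by (rule TR_lami[OF vsA]) (intro linr)
  also have "\<dots> = TR (\<lambda>c' y. ract c' (sw y (\<lambda>g' g. g * Si g'))) (psir a)"
    by (intro tlift_cong2 sw_pull[where sx=sh and sy=sa]) (intro linr, simp add: ract_mult)
  also have "\<dots> = TR (\<lambda>c' y. sa (\<epsilon> y) c') (psir a)"
    by (simp add: Si_ap2 ract_scale2 ract_one)
  also have "\<dots> = a" using psir_counit .
  finally show ?thesis .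
qed

end


context ctx begin

lemma lr_unfold: "lr_prod sh sa lact ract psil psir a b = TL (\<lambda>h a0. TR (\<lambda>b0 h1. ract a0 h1 * lact h b0) (psir b)) (psil a)"
  by (simp add: lr_prod_def)

lemma L6_inner:
  "sw y (\<lambda>g2 h1. ract (ract c h1 * Y) (Si (g1 * g2))) = sw g1 (\<lambda>s1 s2. ract c (Si s2) * ract Y (Si y * Si s1))"
proof -
  have "sw y (\<lambda>g2 h1. ract (ract c h1 * Y) (Si (g1 * g2)))
      = sw y (\<lambda>g2 h1. sw g2 (\<lambda>r1 r2. sw g1 (\<lambda>s1 s2. ract c (h1 * (Si r2 * Si s2)) * ract Y (Si r1 * Si s1))))"
  proof (intro tlift_cong2)
    fix g2 h1
    have "ract (ract c h1 * Y) (Si (g1 * g2)) = sw (Si g2 * Si g1) (\<lambda>k1 k2. ract (ract c h1) k1 * ract Y k2)"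
      by (simp add: Si_antimult ract_alg)
    also have "\<dots> = sw (Si g2) (\<lambda>p1 p2. sw (Si g1) (\<lambda>q1 q2. ract (ract c h1) (p1 * q1) * ract Y (p2 * q2)))"
      by (simp add: linr Hmult_sw[OF vsA])
    also have "\<dots> = sw g2 (\<lambda>r1 r2. sw g1 (\<lambda>s1 s2. ract c (h1 * (Si r2 * Si s2)) * ract Y (Si r1 * Si s1)))"
      by (simp add: linr Si_anticomult[OF vsA] ract_mult)
    finally show "ract (ract c h1 * Y) (Si (g1 * g2)) = sw g2 (\<lambda>r1 r2. sw g1 (\<lambda>s1 s2. ract c (h1 * (Si r2 * Si s2)) * ract Y (Si r1 * Si s1)))" .
  qed
  also have "\<dots> = sw y (\<lambda>r1 t. sw t (\<lambda>r2 h1. sw g1 (\<lambda>s1 s2. ract c (h1 * (Si r2 * Si s2)) * ract Y (Si r1 * Si s1))))"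
    by (rule Hcoassoc[OF vsA]) (intro linr)
  also have "\<dots> = sw y (\<lambda>r1 t. sw g1 (\<lambda>s1 s2. sw t (\<lambda>r2 h1. ract c (h1 * (Si r2 * Si s2)) * ract Y (Si r1 * Si s1))))"
    by (intro tlift_cong2 tlift_swap)
  also have "\<dots> = sw y (\<lambda>r1 t. sw g1 (\<lambda>s1 s2. sa (\<epsilon> t) (ract c (Si s2) * ract Y (Si r1 * Si s1))))"
  proof (intro tlift_cong2)
    fix r1 t s1 s2
    have "sw t (\<lambda>r2 h1. ract c (h1 * (Si r2 * Si s2)) * ract Y (Si r1 * Si s1))
        = ract c (sw t (\<lambda>r2 h1. h1 * Si r2) * Si s2) * ract Y (Si r1 * Si s1)"
      by (rule sw_pull[where sx=sh and sy=sa]) (intro linr, simp add: mult.assoc)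
    then show "sw t (\<lambda>r2 h1. ract c (h1 * (Si r2 * Si s2)) * ract Y (Si r1 * Si s1))
        = sa (\<epsilon> t) (ract c (Si s2) * ract Y (Si r1 * Si s1))"
      by (simp add: Si_ap2 sh_mult1 ract_scale2 sa_mult1)
  qed
  also have "\<dots> = sw y (\<lambda>r1 t. sa (\<epsilon> t) (sw g1 (\<lambda>s1 s2. ract c (Si s2) * ract Y (Si r1 * Si s1))))"
    by (intro tlift_cong2 tlift_scale_fun[OF vsA])
  also have "\<dots> = sw g1 (\<lambda>s1 s2. ract c (Si s2) * ract Y (Si y * Si s1))"
    by (rule Hcounit1'[where su=sa]) (intro linr)
  finally show ?thesis .
qed

lemma lam_mult: "lam' (lr_prod sh sa lact ract psil psir a b) = lt_prod HC UNIV tscale sa (*) pia psi (lam' a) (lam' b)"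
proof -
  have "lam' (lr_prod sh sa lact ract psil psir a b)
     = TL (\<lambda>h a0. TR (\<lambda>b0 h1. TR (\<lambda>c g. ract c (Si g)) (psir (ract a0 h1 * lact h b0))) (psir b)) (psil a)"
    unfolding lam_def lr_unfold
    by (simp add: linr tlift_lin_pull'[where sx=sa and sy=sa and f="\<lambda>z. TR (\<lambda>c g. ract c (Si g)) (psir z)"])
  also have "\<dots> = TL (\<lambda>h a0. TR (\<lambda>b0 h1. TR (\<lambda>c g1. TR (\<lambda>d g2. ract (ract c h1 * lact h d) (Si (g1 * g2))) (psir b0)) (psir a0)) (psir b)) (psil a)"
    by (simp add: linr psir_mult_sw[OF vsA] psir_ract_sw[OF vsA] psir_lact_sw[OF vsA])
  also have "\<dots> = TL (\<lambda>h a0. TR (\<lambda>c g1. TR (\<lambda>b0 h1. TR (\<lambda>d g2. ract (ract c h1 * lact h d) (Si (g1 * g2))) (psir b0)) (psir b)) (psir a0)) (psil a)"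
    by (intro tlift_cong2 tlift_swap)
  also have "\<dots> = TR (\<lambda>x g1. TL (\<lambda>h c. TR (\<lambda>b0 h1. TR (\<lambda>d g2. ract (ract c h1 * lact h d) (Si (g1 * g2))) (psir b0)) (psir b)) (psil x)) (psir a)"
    by (rule bicomod_sw[OF vsA, symmetric]) (intro linr)
  also have "\<dots> = TR (\<lambda>x g1. TL (\<lambda>h c. TR (\<lambda>d y. sw y (\<lambda>g2 h1. ract (ract c h1 * lact h d) (Si (g1 * g2)))) (psir b)) (psil x)) (psir a)"
    by (intro tlift_cong2 psir_coassoc_sw[OF vsA]) (intro linr)
  also have "\<dots> = TR (\<lambda>x g1. TL (\<lambda>h c. TR (\<lambda>d y. sw g1 (\<lambda>s1 s2. ract c (Si s2) * ract (lact h d) (Si y * Si s1))) (psir b)) (psil x)) (psir a)"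
    by (simp only: L6_inner)
  finally have LHS: "lam' (lr_prod sh sa lact ract psil psir a b) = \<dots>" .
  have "lt_prod HC UNIV tscale sa (*) pia psi (lam' a) (lam' b)
      = TR (\<lambda>x' h'. TL (\<lambda>h e. e * ract (lact h (lam' b)) (Si h')) (psil x')) (psir (lam' a))"
    by (rule lt_sw)
  also have "\<dots> = TR (\<lambda>c' y. sw y (\<lambda>g' g. TL (\<lambda>h e. e * ract (lact h (lam' b)) (Si g')) (psil (ract c' (Si g))))) (psir a)"
    by (rule TR_lam[OF vsA]) (intro linr)
  also have "\<dots> = TR (\<lambda>c' y. sw y (\<lambda>g' g. TL (\<lambda>h e. ract e (Si g) * ract (lact h (lam' b)) (Si g')) (psil c'))) (psir a)"
    by (simp add: linr psil_ract_sw[OF vsA])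
  also have "\<dots> = TR (\<lambda>c' y. TL (\<lambda>h e. sw y (\<lambda>g' g. ract e (Si g) * ract (lact h (lam' b)) (Si g'))) (psil c')) (psir a)"
    by (intro tlift_cong2 tlift_swap)
  also have "\<dots> = TR (\<lambda>c' y. TL (\<lambda>h e. TR (\<lambda>d y'. sw y (\<lambda>g' g. ract e (Si g) * ract (lact h d) (Si y' * Si g'))) (psir b)) (psil c')) (psir a)"
  proof (intro tlift_cong2)
    fix c' y h e
    have "sw y (\<lambda>g' g. ract e (Si g) * ract (lact h (lam' b)) (Si g'))
        = sw y (\<lambda>g' g. TR (\<lambda>d y'. ract e (Si g) * ract (lact h d) (Si y' * Si g')) (psir b))"
    proof (intro tlift_cong2)
      fix g' g
      show "ract e (Si g) * ract (lact h (lam' b)) (Si g') = TR (\<lambda>d y'. ract e (Si g) * ract (lact h d) (Si y' * Si g')) (psir b)"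
        unfolding lam_def
        by (simp add: linr tlift_lin_pull'[where sx=sa and sy=sa and f="\<lambda>z. ract e (Si g) * ract (lact h z) (Si g')"]
            lr_comm[symmetric] ract_mult)
    qed
    also have "\<dots> = TR (\<lambda>d y'. sw y (\<lambda>g' g. ract e (Si g) * ract (lact h d) (Si y' * Si g'))) (psir b)"
      by (rule tlift_swap)
    finally show "sw y (\<lambda>g' g. ract e (Si g) * ract (lact h (lam' b)) (Si g')) = \<dots>" .
  qed
  finally have RHS: "lt_prod HC UNIV tscale sa (*) pia psi (lam' a) (lam' b) = \<dots>" .
  show ?thesis unfolding LHS RHS by (intro tlift_cong2 tlift_swap refl)
qed

end


lemma lin_on_comp: "lin_on M s1 s2 f \<Longrightarrow> (\<And>x. x \<in> M \<Longrightarrow> f x \<in> N) \<Longrightarrow> lin_on N s2 s3 g \<Longrightarrow> lin_on M s1 s3 (\<lambda>x. g (f x))"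
  unfolding lin_on_def by (auto simp: subsp_def)

lemma lin_on_zero': "lin_on M s1 s2 f \<Longrightarrow> 0 \<in> M \<Longrightarrow> f 0 = 0"
  using lin_onD(1)[of M s1 s2 f 0 0] by simp

lemma tlift_in_subsp_UNIV: "subsp M s \<Longrightarrow> (\<And>a b. \<gamma> a b \<in> M) \<Longrightarrow> tlift UNIV UNIV sv sw \<gamma> t \<in> M"
  unfolding tlift_rep
  by (rule conjunct2[OF sum_list_additive_on[where L=id]]) (auto simp: subspD)

sublocale ctx \<subseteq> tKK: tctx "tspace UNIV UNIV sh sh" "tspace UNIV UNIV sh sh" tscale tscale by (intro tctx.intro subHC)

context ctx begin

abbreviation m' where "m' \<equiv> hhop_mult sh"
abbreviation u' where "u' \<equiv> hhop_unit sh"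
abbreviation D' where "D' \<equiv> hhop_comult sh \<Delta>"
abbreviation e' where "e' \<equiv> hhop_counit sh \<epsilon>"

lemma HC_ext:
  assumes su: "vector_space su" and F: "lin_on HC tscale su F" and G: "lin_on HC tscale su G"
    and eq: "\<And>h g. F (tens sh sh h g) = G (tens sh sh h g)" and x: "x \<in> HC"
  shows "F x = G x"
proof -
  have F0: "F 0 = 0" using lin_on_zero'[OF F tspace_zero] .
  have G0: "G 0 = 0" using lin_on_zero'[OF G tspace_zero] .
  have "F x = F (tlift UNIV UNIV sh sh (tens sh sh) x)" using tlift_eta[OF x] by simp
  also have "\<dots> = tlift UNIV UNIV sh sh (\<lambda>h g. F (tens sh sh h g)) x"
    by (rule tlift_additive_on[where M=HC, OF lin_onD(1)[OF F] F0 tspace_add tspace_zero x HC_tens])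
  also have "\<dots> = tlift UNIV UNIV sh sh (\<lambda>h g. G (tens sh sh h g)) x" by (simp add: eq)
  also have "\<dots> = G (tlift UNIV UNIV sh sh (tens sh sh) x)"
    by (rule tlift_additive_on[where M=HC, OF lin_onD(1)[OF G] G0 tspace_add tspace_zero x HC_tens, symmetric])
  also have "\<dots> = G x" using tlift_eta[OF x] by simp
  finally show ?thesis .
qed

lemma m'_kernel: "bilin_on UNIV UNIV sh sh tscale (\<lambda>a b. tlift UNIV UNIV sh sh (\<lambda>c d. tens sh sh (a * c) (d * b)) y)"
  by (intro linr)

lemma m'_tens: "m' (tens sh sh h g) (tens sh sh h' g') = tens sh sh (h * h') (g' * g)"
  unfolding hhop_mult_def tmult_def
  by (simp add: tHH.tlift_tens[OF vsT m'_kernel] tHH.tlift_tens[OF vsT] linr)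

lemma m'_HC: "x \<in> HC \<Longrightarrow> y \<in> HC \<Longrightarrow> m' x y \<in> HC"
  unfolding hhop_mult_def by (rule tmult_tspace[OF subH subH]) auto

lemma m'_lin1: "lin_on HC tscale tscale (\<lambda>x. m' x y)"
  unfolding hhop_mult_def tmult_def by (rule tlift_lin_on[OF subH subH vsT m'_kernel])

lemma m'_lin2: "lin_on HC tscale tscale (\<lambda>y. m' x y)"
  unfolding hhop_mult_def tmult_def
  by (rule lin_on_tlift_fun_UNIV[OF vsT]) (rule tlift_lin_on[OF subH subH vsT], intro linr)

lemma u'_HC: "u' \<in> HC" unfolding hhop_unit_def by (rule HC_tens)

lemma D'_kernel: "bilin_on UNIV UNIV sh sh tscale (\<lambda>h h'. sw h (\<lambda>h1 h2. sw h' (\<lambda>g1 g2.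
         tens tscale tscale (tens sh sh h1 g1) (tens sh sh h2 g2))))"
  by (intro linr)

lemma D'_tens: "D' (tens sh sh h g) = sw h (\<lambda>h1 h2. sw g (\<lambda>g1 g2. tens tscale tscale (tens sh sh h1 g1) (tens sh sh h2 g2)))"
  unfolding hhop_comult_def by (rule tHH.tlift_tens[OF vsT D'_kernel]) auto

lemma D'_HC: "D' x \<in> tspace HC HC tscale tscale"
  unfolding hhop_comult_def
  by (intro tlift_in_subsp_UNIV[OF subsp_tspace[OF subHC]] tspace_tens HC_tens)

lemma D'_lin: "lin_on HC tscale tscale D'"
  unfolding hhop_comult_def by (rule tlift_lin_on[OF subH subH vsT D'_kernel])

lemma e'_tens: "e' (tens sh sh h g) = \<epsilon> h * \<epsilon> g"
  unfolding hhop_counit_def by (rule tHH.tlift_tens[OF vsK]) (intro linr, auto)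

lemma e'_lin: "lin_on HC tscale (*) e'"
  unfolding hhop_counit_def by (rule tlift_lin_on[OF subH subH vsK]) (intro linr)

lemma K1:
  assumes su: "vector_space su" and bl: "bilin_on HC HC tscale tscale su \<beta>" and x: "x \<in> HC"
  shows "tlift HC HC tscale tscale \<beta> (D' x) = tlift UNIV UNIV sh sh (\<lambda>h h'. sw h (\<lambda>h1 h2. sw h' (\<lambda>g1 g2. \<beta> (tens sh sh h1 g1) (tens sh sh h2 g2)))) x"
  unfolding hhop_comult_def
  apply (subst tKK.tlift_comp[OF su bl x])
   apply (intro tlift_in_subsp[OF subsp_tspace[OF subHC]] Delta_tspace tspace_tens HC_tens UNIV_I)
  apply (intro tlift_cong2)
  apply (subst tKK.tlift_comp[OF su bl Delta_tspace])
   apply (intro tlift_in_subsp[OF subsp_tspace[OF subHC]] Delta_tspace tspace_tens HC_tens UNIV_I)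
  apply (intro tlift_cong2)
  apply (subst tKK.tlift_comp[OF su bl Delta_tspace])
   apply (rule tspace_tens; rule HC_tens)
  apply (intro tlift_cong2)
  apply (rule tKK.tlift_tens[OF su bl HC_tens HC_tens])
  done

end


context ctx begin

lemma pia_bilin: "bilin_on HC UNIV tscale sa sa pia"
  by (rule bilin_onI2) (auto intro: pia_lin1 pia_lin2)

lemma ract_scale1: "ract (sa c a) h = sa c (ract a h)" using bilinD(2)[OF ract_bilin] by simp
lemma lact_scale2: "lact h (sa c a) = sa c (lact h a)" using bilinD(4)[OF lact_bilin] by simp

lemma pia_mult:
  assumes x: "x \<in> HC" and y: "y \<in> HC"
  shows "pia (m' x y) a = pia x (pia y a)"
proof -
  have gen: "pia (m' (tens sh sh h g) y) a = pia (tens sh sh h g) (pia y a)" for h g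
  proof (rule HC_ext[OF vsA _ _ _ y, where F="\<lambda>y. pia (m' (tens sh sh h g) y) a" and G="\<lambda>y. pia (tens sh sh h g) (pia y a)"])
    show "lin_on HC tscale sa (\<lambda>y. pia (m' (tens sh sh h g) y) a)"
      by (rule lin_on_comp[OF m'_lin2 m'_HC[OF HC_tens] pia_lin1])
    show "lin_on HC tscale sa (\<lambda>y. pia (tens sh sh h g) (pia y a))"
      by (rule lin_on_comp[OF pia_lin1 _ pia_lin2]) auto
    fix h' g'
    show "pia (m' (tens sh sh h g) (tens sh sh h' g')) a = pia (tens sh sh h g) (pia (tens sh sh h' g') a)"
      by (simp add: m'_tens pia_tens lact_mult ract_mult lr_comm)
  qed
  show ?thesis
  proof (rule HC_ext[OF vsA _ _ _ x, where F="\<lambda>x. pia (m' x y) a" and G="\<lambda>x. pia x (pia y a)"])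
    show "lin_on HC tscale sa (\<lambda>x. pia (m' x y) a)"
      by (rule lin_on_comp[OF m'_lin1 m'_HC[OF _ y] pia_lin1])
    show "lin_on HC tscale sa (\<lambda>x. pia x (pia y a))" by (rule pia_lin1)
  qed (rule gen)
qed

lemma pia_unit: "pia u' a = a"
  unfolding hhop_unit_def by (simp add: pia_tens lact_one ract_one)

lemma pia_alg:
  assumes x: "x \<in> HC"
  shows "pia x (a * b) = tlift HC HC tscale tscale (\<lambda>x1 x2. pia x1 a * pia x2 b) (D' x)"
proof -
  have bl: "bilin_on HC HC tscale tscale sa (\<lambda>x1 x2. pia x1 a * pia x2 b)"
    by (rule bilin_onI2) (auto intro: lin_amult1 lin_amult2 pia_lin1)
  show ?thesis
  proof (rule HC_ext[OF vsA _ _ _ x])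
    show "lin_on HC tscale sa (\<lambda>x. pia x (a * b))" by (rule pia_lin1)
    show "lin_on HC tscale sa (\<lambda>x. tlift HC HC tscale tscale (\<lambda>x1 x2. pia x1 a * pia x2 b) (D' x))"
      by (rule lin_on_comp[OF D'_lin D'_HC tlift_lin_on[OF subHC subHC vsA bl]])
    fix h g
    have "pia (tens sh sh h g) (a * b) = sw h (\<lambda>h1 h2. sw g (\<lambda>g1 g2. ract (lact h1 a) g1 * ract (lact h2 b) g2))"
      by (simp add: pia_tens lact_alg linr tlift_lin_pull'[where sx=sa and sy=sa and f="\<lambda>z. ract z g"] ract_alg)
    also have "\<dots> = tlift HC HC tscale tscale (\<lambda>x1 x2. pia x1 a * pia x2 b) (D' (tens sh sh h g))"
      by (simp add: K1[OF vsA bl HC_tens] HC_tens tHH.tlift_tens[OF vsA] linr pia_tens)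
    finally show "pia (tens sh sh h g) (a * b) = tlift HC HC tscale tscale (\<lambda>x1 x2. pia x1 a * pia x2 b) (D' (tens sh sh h g))" .
  qed
qed

lemma pia_one:
  assumes x: "x \<in> HC"
  shows "pia x 1 = sa (e' x) 1"
proof (rule HC_ext[OF vsA _ _ _ x])
  show "lin_on HC tscale sa (\<lambda>x. pia x 1)" by (rule pia_lin1)
  show "lin_on HC tscale sa (\<lambda>x. sa (e' x) 1)" by (rule lin_scale_scalar[OF vsA e'_lin])
  fix h g
  show "pia (tens sh sh h g) 1 = sa (e' (tens sh sh h g)) 1"
    by (simp add: pia_tens e'_tens lact_unit ract_scale1 ract_unit vsD[OF vsA] mult.commute)
qed

lemma lmod_pia: "lmod_alg HC tscale m' u' D' e' UNIV sa (*) 1 pia"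
  unfolding lmod_alg_def using pia_bilin pia_mult pia_unit pia_alg pia_one by auto

end


context ctx begin

lemma K1_tens:
  assumes su: "vector_space su" and bl: "bilin_on HC HC tscale tscale su \<beta>"
  shows "tlift HC HC tscale tscale \<beta> (D' (tens sh sh h g)) = sw h (\<lambda>h1 h2. sw g (\<lambda>g1 g2. \<beta> (tens sh sh h1 g1) (tens sh sh h2 g2)))"
  unfolding D'_tens
  apply (subst tKK.tlift_comp[OF su bl Delta_tspace])
   apply (intro tlift_in_subsp_UNIV[OF subsp_tspace[OF subHC]] tspace_tens HC_tens UNIV_I)
  apply (intro tlift_cong2)
  apply (subst tKK.tlift_comp[OF su bl Delta_tspace])
   apply (rule tspace_tens; rule HC_tens)
  apply (intro tlift_cong2)
  apply (rule tKK.tlift_tens[OF su bl HC_tens HC_tens])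
  done

lemma m'_bilin: "bilin_on HC HC tscale tscale tscale m'"
  by (rule bilin_onI2) (auto intro: m'_lin1 m'_lin2)

lemma m'_assoc:
  assumes x: "x \<in> HC" and y: "y \<in> HC" and z: "z \<in> HC"
  shows "m' (m' x y) z = m' x (m' y z)"
proof -
  have g3: "m' (m' (tens sh sh h g) (tens sh sh h' g')) z = m' (tens sh sh h g) (m' (tens sh sh h' g') z)" for h g h' g'
  proof (rule HC_ext[OF vsT m'_lin2 _ _ z])
    show "lin_on HC tscale tscale (\<lambda>z. m' (tens sh sh h g) (m' (tens sh sh h' g') z))"
      by (rule lin_on_comp[OF m'_lin2 m'_HC[OF HC_tens] m'_lin2])
    fix h'' g'' show "m' (m' (tens sh sh h g) (tens sh sh h' g')) (tens sh sh h'' g'') = m' (tens sh sh h g) (m' (tens sh sh h' g') (tens sh sh h'' g''))"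
      by (simp add: m'_tens mult.assoc)
  qed
  have g2: "m' (m' (tens sh sh h g) y) z = m' (tens sh sh h g) (m' y z)" for h g
  proof (rule HC_ext[OF vsT _ _ _ y, where F="\<lambda>y. m' (m' (tens sh sh h g) y) z" and G="\<lambda>y. m' (tens sh sh h g) (m' y z)"])
    show "lin_on HC tscale tscale (\<lambda>y. m' (m' (tens sh sh h g) y) z)"
      by (rule lin_on_comp[OF m'_lin2 m'_HC[OF HC_tens] m'_lin1])
    show "lin_on HC tscale tscale (\<lambda>y. m' (tens sh sh h g) (m' y z))"
      by (rule lin_on_comp[OF m'_lin1 m'_HC[OF _ z] m'_lin2])
  qed (rule g3)
  show ?thesis
  proof (rule HC_ext[OF vsT _ _ _ x, where F="\<lambda>x. m' (m' x y) z" and G="\<lambda>x. m' x (m' y z)"])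
    show "lin_on HC tscale tscale (\<lambda>x. m' (m' x y) z)"
      by (rule lin_on_comp[OF m'_lin1 m'_HC[OF _ y] m'_lin1])
    show "lin_on HC tscale tscale (\<lambda>x. m' x (m' y z))" by (rule m'_lin1)
  qed (rule g2)
qed

lemma m'_unit: "x \<in> HC \<Longrightarrow> m' u' x = x" "x \<in> HC \<Longrightarrow> m' x u' = x"
proof -
  assume x: "x \<in> HC"
  show "m' u' x = x"
    by (rule HC_ext[OF vsT m'_lin2 lin_id _ x]) (simp add: hhop_unit_def m'_tens)
  show "m' x u' = x"
    by (rule HC_ext[OF vsT m'_lin1 lin_id _ x]) (simp add: hhop_unit_def m'_tens)
qed

lemma alg_HC: "alg HC tscale m' u'"
  unfolding alg_def using subHC u'_HC m'_HC m'_bilin m'_assoc m'_unit by auto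

lemma tens3_bilin12: "bilin_on HC HC tscale tscale tscale (\<lambda>u v. tens tscale tscale u (tens tscale tscale v w))"
  if "w \<in> HC" for w
  using tri_bilin12[OF subHC subHC subHC tens3_tri[OF subHC subHC subHC] that] .

lemma tens3_bilin23: "bilin_on HC HC tscale tscale tscale (\<lambda>v w. tens tscale tscale u (tens tscale tscale v w))"
  if "u \<in> HC" for u
  using tri_bilin23[OF subHC subHC subHC tens3_tri[OF subHC subHC subHC] that] .

lemma D'_coassoc:
  assumes x: "x \<in> HC"
  shows "tassoc HC HC HC tscale tscale tscale (tmap HC HC tscale tscale tscale tscale D' id (D' x))
       = tmap HC HC tscale tscale tscale tscale id D' (D' x)"
proof -
  let ?b = "\<lambda>u v w. tens tscale tscale u (tens tscale tscale v (w::('h,'h,'k) tensor))"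
  have tri: "tri_on HC HC HC tscale tscale tscale tscale ?b" by (rule tens3_tri[OF subHC subHC subHC])
  have bl1: "bilin_on HC HC tscale tscale tscale (\<lambda>p w. tlift HC HC tscale tscale (\<lambda>u v. ?b u v w) (D' p))"
  proof (rule bilin_onI2)
    fix w assume "w \<in> HC"
    then show "lin_on HC tscale tscale (\<lambda>p. tlift HC HC tscale tscale (\<lambda>u v. ?b u v w) (D' p))"
      by (rule lin_on_comp[OF D'_lin D'_HC tlift_lin_on[OF subHC subHC vsT tens3_bilin12]])
  next
    fix p
    show "lin_on HC tscale tscale (\<lambda>w. tlift HC HC tscale tscale (\<lambda>u v. ?b u v w) (D' p))"
      by (rule lin_on_tlift_fun[OF vsT D'_HC]) (rule lin_onI, simp_all add: tens_add2 tens_scale2)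
  qed
  have bl2: "bilin_on HC HC tscale tscale tscale (\<lambda>u p. tlift HC HC tscale tscale (\<lambda>v w. ?b u v w) (D' p))"
  proof (rule bilin_onI2)
    fix p
    show "lin_on HC tscale tscale (\<lambda>u. tlift HC HC tscale tscale (\<lambda>v w. ?b u v w) (D' p))"
      by (rule lin_on_tlift_fun[OF vsT D'_HC]) (rule lin_onI, simp_all add: tens_add1 tens_scale1)
  next
    fix u assume "u \<in> HC"
    then show "lin_on HC tscale tscale (\<lambda>p. tlift HC HC tscale tscale (\<lambda>v w. ?b u v w) (D' p))"
      by (rule lin_on_comp[OF D'_lin D'_HC tlift_lin_on[OF subHC subHC vsT tens3_bilin23]])
  qed
  let ?F = "tlift UNIV UNIV sh sh (\<lambda>h h'. sw h (\<lambda>a r. sw r (\<lambda>b h2. sw h' (\<lambda>c r'. sw r' (\<lambda>d g2.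
          ?b (tens sh sh a c) (tens sh sh b d) (tens sh sh h2 g2)))))) x"
  have pw: "sw h (\<lambda>h1 h2. sw h' (\<lambda>g1 g2. sw h1 (\<lambda>a b. sw g1 (\<lambda>c d. ?b (tens sh sh a c) (tens sh sh b d) (tens sh sh h2 g2)))))
        = sw h (\<lambda>a r. sw r (\<lambda>b h2. sw h' (\<lambda>c r'. sw r' (\<lambda>d g2. ?b (tens sh sh a c) (tens sh sh b d) (tens sh sh h2 g2)))))" for h h'
  proof -
    have "sw h (\<lambda>h1 h2. sw h' (\<lambda>g1 g2. sw h1 (\<lambda>a b. sw g1 (\<lambda>c d. ?b (tens sh sh a c) (tens sh sh b d) (tens sh sh h2 g2)))))
        = sw h (\<lambda>h1 h2. sw h1 (\<lambda>a b. sw h' (\<lambda>g1 g2. sw g1 (\<lambda>c d. ?b (tens sh sh a c) (tens sh sh b d) (tens sh sh h2 g2)))))"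
      by (intro tlift_cong2 tlift_swap)
    also have "\<dots> = sw h (\<lambda>a r. sw r (\<lambda>b h2. sw h' (\<lambda>g1 g2. sw g1 (\<lambda>c d. ?b (tens sh sh a c) (tens sh sh b d) (tens sh sh h2 g2)))))"
      by (rule Hcoassoc[OF vsT]) (intro linr)
    also have "\<dots> = sw h (\<lambda>a r. sw r (\<lambda>b h2. sw h' (\<lambda>c r'. sw r' (\<lambda>d g2. ?b (tens sh sh a c) (tens sh sh b d) (tens sh sh h2 g2)))))"
      by (intro tlift_cong2 Hcoassoc[OF vsT]) (intro linr)
    finally show "sw h (\<lambda>h1 h2. sw h' (\<lambda>g1 g2. sw h1 (\<lambda>a b. sw g1 (\<lambda>c d. ?b (tens sh sh a c) (tens sh sh b d) (tens sh sh h2 g2)))))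
        = sw h (\<lambda>a r. sw r (\<lambda>b h2. sw h' (\<lambda>c r'. sw r' (\<lambda>d g2. ?b (tens sh sh a c) (tens sh sh b d) (tens sh sh h2 g2)))))" .
  qed
  have L: "ev3 HC HC HC tscale tscale tscale ?b (tassoc HC HC HC tscale tscale tscale (tmap HC HC tscale tscale tscale tscale D' id (D' x)))
     = ?F"
    apply (subst ev3_tassoc_tmap[OF subHC subHC subHC subHC vsT tri D'_HC D'_HC])
    apply (subst K1[OF vsT bl1 x])
    apply (rule tlift_cong2)
    apply (subst K1_tens[OF vsT tens3_bilin12], rule HC_tens)
    apply (rule pw)
    done
  have R: "ev3 HC HC HC tscale tscale tscale ?b (tmap HC HC tscale tscale tscale tscale id D' (D' x)) = ?F"
    apply (subst ev3_tmap[OF subHC subHC subHC subHC vsT tri D'_HC D'_HC])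
    apply (subst K1[OF vsT bl2 x])
    apply (rule tlift_cong2)
    apply (subst K1_tens[OF vsT tens3_bilin23], rule HC_tens)
    apply (rule tlift_cong2, rule tlift_swap)
    done
  have inL: "tassoc HC HC HC tscale tscale tscale (tmap HC HC tscale tscale tscale tscale D' id (D' x)) \<in> tspace HC (tspace HC HC tscale tscale) tscale tscale"
    by (rule tassoc_tspace[OF subHC subHC subHC tmap_tspace[OF subHC subHC subsp_tspace[OF subHC] subHC D'_HC _ D'_HC]]) auto
  have inR: "tmap HC HC tscale tscale tscale tscale id D' (D' x) \<in> tspace HC (tspace HC HC tscale tscale) tscale tscale"
    by (rule tmap_tspace[OF subHC subHC subHC subsp_tspace[OF subHC] _ D'_HC D'_HC]) auto
  show ?thesis
    using ev3_tens[OF subHC subHC subHC inL] ev3_tens[OF subHC subHC subHC inR] L R by simp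
qed

lemma tscale_mult: "tscale (a * b) t = tscale a (tscale b t)"
  by (simp add: tscale_def mult.assoc)

lemma D'_counit:
  assumes x: "x \<in> HC"
  shows "tlift HC HC tscale tscale (\<lambda>a b. tscale (e' a) b) (D' x) = x"
    and "tlift HC HC tscale tscale (\<lambda>a b. tscale (e' b) a) (D' x) = x"
proof -
  have bl1: "bilin_on HC HC tscale tscale tscale (\<lambda>a b. tscale (e' a) b)"
    by (rule bilin_onI2) (auto intro: lin_scale_scalar[OF vsT e'_lin] lin_scale_const[OF vsT lin_id])
  have bl2: "bilin_on HC HC tscale tscale tscale (\<lambda>a b. tscale (e' b) a)"
    by (rule bilin_onI2) (auto intro: lin_scale_scalar[OF vsT e'_lin] lin_scale_const[OF vsT lin_id])
  have "tlift HC HC tscale tscale (\<lambda>a b. tscale (e' a) b) (D' x) = tlift UNIV UNIV sh sh (tens sh sh) x"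
    unfolding K1[OF vsT bl1 x]
  proof (rule tlift_cong2)
    fix h h'
    have "sw h (\<lambda>h1 h2. sw h' (\<lambda>g1 g2. tscale (e' (tens sh sh h1 g1)) (tens sh sh h2 g2)))
       = sw h (\<lambda>h1 h2. tscale (\<epsilon> h1) (sw h' (\<lambda>g1 g2. tscale (\<epsilon> g1) (tens sh sh h2 g2))))"
      by (simp add: e'_tens tscale_mult tlift_scale_fun[OF vsT])
    also have "\<dots> = sw h (\<lambda>h1 h2. tscale (\<epsilon> h1) (tens sh sh h2 h'))"
      by (intro tlift_cong2 arg_cong[where f="tscale _"] Hcounit2'[where su=tscale]) (intro linr)
    also have "\<dots> = tens sh sh h h'"
      by (rule Hcounit2'[where su=tscale]) (intro linr)
    finally show "sw h (\<lambda>h1 h2. sw h' (\<lambda>g1 g2. tscale (e' (tens sh sh h1 g1)) (tens sh sh h2 g2))) = tens sh sh h h'" .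
  qed
  then show "tlift HC HC tscale tscale (\<lambda>a b. tscale (e' a) b) (D' x) = x" using tlift_eta[OF x] by simp
  have "tlift HC HC tscale tscale (\<lambda>a b. tscale (e' b) a) (D' x) = tlift UNIV UNIV sh sh (tens sh sh) x"
    unfolding K1[OF vsT bl2 x]
  proof (rule tlift_cong2)
    fix h h'
    have "sw h (\<lambda>h1 h2. sw h' (\<lambda>g1 g2. tscale (e' (tens sh sh h2 g2)) (tens sh sh h1 g1)))
       = sw h (\<lambda>h1 h2. tscale (\<epsilon> h2) (sw h' (\<lambda>g1 g2. tscale (\<epsilon> g2) (tens sh sh h1 g1))))"
      by (simp add: e'_tens tscale_mult tlift_scale_fun[OF vsT])
    also have "\<dots> = sw h (\<lambda>h1 h2. tscale (\<epsilon> h2) (tens sh sh h1 h'))"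
      by (intro tlift_cong2 arg_cong[where f="tscale _"] Hcounit1'[where su=tscale]) (intro linr)
    also have "\<dots> = tens sh sh h h'"
      by (rule Hcounit1'[where su=tscale]) (intro linr)
    finally show "sw h (\<lambda>h1 h2. sw h' (\<lambda>g1 g2. tscale (e' (tens sh sh h2 g2)) (tens sh sh h1 g1))) = tens sh sh h h'" .
  qed
  then show "tlift HC HC tscale tscale (\<lambda>a b. tscale (e' b) a) (D' x) = x" using tlift_eta[OF x] by simp
qed

lemma coalg_HC: "coalg HC tscale D' e'"
  unfolding coalg_def using subHC D'_HC D'_lin e'_lin D'_coassoc D'_counit by auto

end


context ctx begin

abbreviation tm2 where "tm2 \<equiv> tmult HC HC tscale tscale m' m'"

lemma tens_HC_bilin: "bilin_on HC HC tscale tscale tscale (tens tscale tscale)"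
  using tens_bilin unfolding bilin_on_def lin_on_def by blast

lemma tm2_inner_bilin: "a \<in> HC \<Longrightarrow> b \<in> HC \<Longrightarrow> bilin_on HC HC tscale tscale tscale (\<lambda>c d. tens tscale tscale (m' a c) (m' b d))"
  by (rule bilin_onI2) (auto intro!: lin_tens1 lin_tens2 m'_lin1 m'_lin2)

lemma tm2_kernel_bilin:
  assumes Y: "Y \<in> tspace HC HC tscale tscale"
  shows "bilin_on HC HC tscale tscale tscale (\<lambda>a b. tlift HC HC tscale tscale (\<lambda>c d. tens tscale tscale (m' a c) (m' b d)) Y)"
proof (rule bilin_onI2)
  fix b assume "b \<in> HC"
  show "lin_on HC tscale tscale (\<lambda>a. tlift HC HC tscale tscale (\<lambda>c d. tens tscale tscale (m' a c) (m' b d)) Y)"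
    by (rule lin_on_tlift_fun[OF vsT Y]) (intro lin_tens1 m'_lin1)
next
  fix a assume "a \<in> HC"
  show "lin_on HC tscale tscale (\<lambda>b. tlift HC HC tscale tscale (\<lambda>c d. tens tscale tscale (m' a c) (m' b d)) Y)"
    by (rule lin_on_tlift_fun[OF vsT Y]) (intro lin_tens2 m'_lin1)
qed

lemma tm2_lin1: "Y \<in> tspace HC HC tscale tscale \<Longrightarrow> lin_on (tspace HC HC tscale tscale) tscale tscale (\<lambda>X. tm2 X Y)"
  unfolding tmult_def by (rule tlift_lin_on[OF subHC subHC vsT tm2_kernel_bilin])

lemma tm2_lin2: "X \<in> tspace HC HC tscale tscale \<Longrightarrow> lin_on (tspace HC HC tscale tscale) tscale tscale (\<lambda>Y. tm2 X Y)"
  unfolding tmult_def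
  by (rule lin_on_tlift_fun[OF vsT], assumption) (rule tlift_lin_on[OF subHC subHC vsT tm2_inner_bilin])

lemma tm2_in: "X \<in> tspace HC HC tscale tscale \<Longrightarrow> Y \<in> tspace HC HC tscale tscale \<Longrightarrow> tm2 X Y \<in> tspace HC HC tscale tscale"
  by (rule tmult_tspace[OF subHC subHC]) (auto intro: m'_HC)

lemma D'_mult_gen: "D' (m' (tens sh sh h g) (tens sh sh h' g')) = tm2 (D' (tens sh sh h g)) (D' (tens sh sh h' g'))"
proof -
  let ?T = "tens tscale tscale :: ('h,'h,'k) tensor \<Rightarrow> ('h,'h,'k) tensor \<Rightarrow> _"
  have "D' (m' (tens sh sh h g) (tens sh sh h' g')) = tlift HC HC tscale tscale ?T (D' (tens sh sh (h * h') (g' * g)))"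
    by (simp add: m'_tens tlift_eta[OF D'_HC])
  also have "\<dots> = sw (h * h') (\<lambda>p1 p2. sw (g' * g) (\<lambda>q1 q2. ?T (tens sh sh p1 q1) (tens sh sh p2 q2)))"
    by (rule K1_tens[OF vsT tens_HC_bilin])
  also have "\<dots> = sw h (\<lambda>h1 h2. sw h' (\<lambda>h1' h2'. sw g' (\<lambda>g1' g2'. sw g (\<lambda>g1 g2.
        ?T (tens sh sh (h1 * h1') (g1' * g1)) (tens sh sh (h2 * h2') (g2' * g2))))))"
    by (simp add: linr Hmult_sw[OF vsT])
  also have "\<dots> = sw h (\<lambda>h1 h2. sw g (\<lambda>g1 g2. sw h' (\<lambda>h1' h2'. sw g' (\<lambda>g1' g2'.
        ?T (tens sh sh (h1 * h1') (g1' * g1)) (tens sh sh (h2 * h2') (g2' * g2))))))"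
  proof (rule tlift_cong2)
    fix h1 h2
    have "sw h' (\<lambda>h1' h2'. sw g' (\<lambda>g1' g2'. sw g (\<lambda>g1 g2.
        ?T (tens sh sh (h1 * h1') (g1' * g1)) (tens sh sh (h2 * h2') (g2' * g2)))))
      = sw h' (\<lambda>h1' h2'. sw g (\<lambda>g1 g2. sw g' (\<lambda>g1' g2'.
        ?T (tens sh sh (h1 * h1') (g1' * g1)) (tens sh sh (h2 * h2') (g2' * g2)))))"
      by (rule tlift_cong2, rule tlift_swap)
    also have "\<dots> = sw g (\<lambda>g1 g2. sw h' (\<lambda>h1' h2'. sw g' (\<lambda>g1' g2'.
        ?T (tens sh sh (h1 * h1') (g1' * g1)) (tens sh sh (h2 * h2') (g2' * g2)))))"
      by (rule tlift_swap)
    finally show "sw h' (\<lambda>h1' h2'. sw g' (\<lambda>g1' g2'. sw g (\<lambda>g1 g2.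
        ?T (tens sh sh (h1 * h1') (g1' * g1)) (tens sh sh (h2 * h2') (g2' * g2)))))
      = sw g (\<lambda>g1 g2. sw h' (\<lambda>h1' h2'. sw g' (\<lambda>g1' g2'.
        ?T (tens sh sh (h1 * h1') (g1' * g1)) (tens sh sh (h2 * h2') (g2' * g2)))))" .
  qed
  also have "\<dots> = tlift HC HC tscale tscale (\<lambda>A B. tlift HC HC tscale tscale (\<lambda>C D. ?T (m' A C) (m' B D)) (D' (tens sh sh h' g'))) (D' (tens sh sh h g))"
    by (simp add: K1_tens[OF vsT tm2_kernel_bilin[OF D'_HC]] K1_tens[OF vsT tm2_inner_bilin] HC_tens m'_tens)
  also have "\<dots> = tlift HC HC tscale tscale ?T (tm2 (D' (tens sh sh h g)) (D' (tens sh sh h' g')))"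
    by (rule tmult_tlift[OF subHC subHC vsT tens_HC_bilin m'_HC m'_HC D'_HC D'_HC, symmetric])
  also have "\<dots> = tm2 (D' (tens sh sh h g)) (D' (tens sh sh h' g'))"
    by (rule tlift_eta[OF tm2_in[OF D'_HC D'_HC]])
  finally show ?thesis .
qed

lemma D'_mult:
  assumes x: "x \<in> HC" and y: "y \<in> HC"
  shows "D' (m' x y) = tm2 (D' x) (D' y)"
proof -
  have g: "D' (m' (tens sh sh h g) y) = tm2 (D' (tens sh sh h g)) (D' y)" for h g
  proof (rule HC_ext[OF vsT _ _ _ y, where F="\<lambda>y. D' (m' (tens sh sh h g) y)" and G="\<lambda>y. tm2 (D' (tens sh sh h g)) (D' y)"])
    show "lin_on HC tscale tscale (\<lambda>y. D' (m' (tens sh sh h g) y))"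
      by (rule lin_on_comp[OF m'_lin2 m'_HC[OF HC_tens] D'_lin])
    show "lin_on HC tscale tscale (\<lambda>y. tm2 (D' (tens sh sh h g)) (D' y))"
      by (rule lin_on_comp[OF D'_lin D'_HC tm2_lin2[OF D'_HC]])
  qed (rule D'_mult_gen)
  show ?thesis
  proof (rule HC_ext[OF vsT _ _ _ x, where F="\<lambda>x. D' (m' x y)" and G="\<lambda>x. tm2 (D' x) (D' y)"])
    show "lin_on HC tscale tscale (\<lambda>x. D' (m' x y))"
      by (rule lin_on_comp[OF m'_lin1 m'_HC[OF _ y] D'_lin])
    show "lin_on HC tscale tscale (\<lambda>x. tm2 (D' x) (D' y))"
      by (rule lin_on_comp[OF D'_lin D'_HC tm2_lin1[OF D'_HC]])
  qed (rule g)
qed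

lemma D'_unit: "D' u' = tens tscale tscale u' u'"
  unfolding hhop_unit_def D'_tens by (simp add: linr Hone_sw[OF vsT])

lemma e'_mult:
  assumes x: "x \<in> HC" and y: "y \<in> HC"
  shows "e' (m' x y) = e' x * e' y"
proof -
  have g: "e' (m' (tens sh sh h g) y) = e' (tens sh sh h g) * e' y" for h g
  proof (rule HC_ext[OF vsK _ _ _ y, where F="\<lambda>y. e' (m' (tens sh sh h g) y)" and G="\<lambda>y. e' (tens sh sh h g) * e' y"])
    show "lin_on HC tscale (*) (\<lambda>y. e' (m' (tens sh sh h g) y))"
      by (rule lin_on_comp[OF m'_lin2 m'_HC[OF HC_tens] e'_lin])
    show "lin_on HC tscale (*) (\<lambda>y. e' (tens sh sh h g) * e' y)"
      by (rule lin_kmult2[OF e'_lin])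
    fix h' g'
    show "e' (m' (tens sh sh h g) (tens sh sh h' g')) = e' (tens sh sh h g) * e' (tens sh sh h' g')"
      by (simp add: m'_tens e'_tens eps_mult algebra_simps)
  qed
  show ?thesis
  proof (rule HC_ext[OF vsK _ _ _ x, where F="\<lambda>x. e' (m' x y)" and G="\<lambda>x. e' x * e' y"])
    show "lin_on HC tscale (*) (\<lambda>x. e' (m' x y))"
      by (rule lin_on_comp[OF m'_lin1 m'_HC[OF _ y] e'_lin])
    show "lin_on HC tscale (*) (\<lambda>x. e' x * e' y)"
      by (rule lin_kmult1[OF e'_lin])
  qed (rule g)
qed

lemma e'_unit: "e' u' = 1"
  unfolding hhop_unit_def by (simp add: e'_tens eps_one)

lemma bialg_HC: "bialg HC tscale m' u' D' e'"
  unfolding bialg_def using alg_HC coalg_HC D'_mult D'_unit e'_mult e'_unit by (auto simp: hhop_mult_def)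

end


context ctx begin

lemma psi_lin: "lin_on UNIV sa tscale psi"
  unfolding psi_coact_def by (intro linr)

lemma tensKA_bilin: "bilin_on HC UNIV tscale sa tscale (tens tscale sa)"
  using tens_bilin unfolding bilin_on_def lin_on_def by blast

lemma psi_counit: "tlift HC UNIV tscale sa (\<lambda>x b. sa (e' x) b) (psi a) = a"
proof -
  have bl: "bilin_on HC UNIV tscale sa sa (\<lambda>x b. sa (e' x) b)"
    by (rule bilin_onI2) (auto intro: lin_scale_scalar[OF vsA e'_lin] lin_scale_const[OF vsA lin_id])
  have "tlift HC UNIV tscale sa (\<lambda>x b. sa (e' x) b) (psi a)
      = TR (\<lambda>x h'. TL (\<lambda>h b. sa (\<epsilon> h') (sa (\<epsilon> h) b)) (psil x)) (psir a)"
    by (simp add: psi_sw[OF vsA bl] e'_tens eps_Si vsD[OF vsA] mult.commute)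
  also have "\<dots> = TR (\<lambda>x h'. sa (\<epsilon> h') (TL (\<lambda>h b. sa (\<epsilon> h) b) (psil x))) (psir a)"
    by (intro tlift_cong2 tlift_scale_fun[OF vsA])
  also have "\<dots> = a" by (simp add: psil_counit psir_counit)
  finally show ?thesis .
qed

lemma psi_one: "psi 1 = tens tscale sa u' 1"
  unfolding psi_coact_def hhop_unit_def
  by (simp add: linr psir_one_sw[OF vsT] psil_one_sw[OF vsT] Si_one)

abbreviation tmKA where "tmKA \<equiv> tmult HC UNIV tscale sa m' (*)"

lemma psi_mult: "psi (a * b) = tmKA (psi a) (psi b)"
proof -
  let ?T = "tens tscale sa :: ('h,'h,'k) tensor \<Rightarrow> 'a \<Rightarrow> _"
  have inner_bl: "bilin_on HC UNIV tscale sa tscale (\<lambda>Y d. ?T (m' X Y) (c * d))" if "X \<in> HC" for X c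
    by (rule bilin_onI2) (auto intro!: lin_tens1 lin_tens2 m'_lin2 lin_amult2 lin_id)
  have outer_bl: "bilin_on HC UNIV tscale sa tscale (\<lambda>X c. tlift HC UNIV tscale sa (\<lambda>Y d. ?T (m' X Y) (c * d)) (psi b))"
    by (rule bilin_onI2) (auto intro!: lin_on_tlift_fun[OF vsT psi_tspace] lin_tens1 lin_tens2 m'_lin1 lin_amult1 lin_id)
  have in1: "tmKA (psi a) (psi b) \<in> tspace HC UNIV tscale sa"
    by (rule tmult_tspace[OF subHC subA]) (auto intro: m'_HC psi_tspace)
  have "psi (a * b) = tlift HC UNIV tscale sa ?T (psi (a * b))" by (rule tlift_eta[OF psi_tspace, symmetric])
  also have "\<dots> = TR (\<lambda>x h'. TL (\<lambda>h c. ?T (tens sh sh h (Si h')) c) (psil x)) (psir (a * b))"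
    by (rule psi_sw[OF vsT tensKA_bilin])
  also have "\<dots> = TR (\<lambda>a1 x. TR (\<lambda>b1 y. TL (\<lambda>h1 c1. TL (\<lambda>h2 c2. ?T (tens sh sh (h1 * h2) (Si (x * y))) (c1 * c2)) (psil b1)) (psil a1)) (psir b)) (psir a)"
    by (simp add: linr psir_mult_sw[OF vsT] psil_mult_sw[OF vsT])
  also have "\<dots> = TR (\<lambda>a1 x. TL (\<lambda>h1 c1. TR (\<lambda>b1 y. TL (\<lambda>h2 c2. ?T (tens sh sh (h1 * h2) (Si (x * y))) (c1 * c2)) (psil b1)) (psir b)) (psil a1)) (psir a)"
    by (rule tlift_cong2, rule tlift_swap)
  also have "\<dots> = tlift HC UNIV tscale sa (\<lambda>X c. tlift HC UNIV tscale sa (\<lambda>Y d. ?T (m' X Y) (c * d)) (psi b)) (psi a)"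
    by (simp add: psi_sw[OF vsT outer_bl] psi_sw[OF vsT inner_bl] HC_tens m'_tens Si_antimult)
  also have "\<dots> = tlift HC UNIV tscale sa ?T (tmKA (psi a) (psi b))"
    by (rule tmult_tlift[OF subHC subA vsT tensKA_bilin m'_HC _ psi_tspace psi_tspace, symmetric]) auto
  also have "\<dots> = tmKA (psi a) (psi b)" by (rule tlift_eta[OF in1])
  finally show ?thesis .
qed

lemma psi_coassoc:
  "tassoc HC HC UNIV tscale tscale sa (tmap HC UNIV tscale sa tscale sa D' id (psi a))
     = tmap HC UNIV tscale sa tscale tscale id psi (psi a)"
proof -
  let ?b = "\<lambda>u v w. tens tscale tscale u (tens tscale sa v (w::'a))"
  have tri: "tri_on HC HC UNIV tscale tscale sa tscale ?b" by (rule tens3_tri[OF subHC subHC subA])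
  have b12: "bilin_on HC HC tscale tscale tscale (\<lambda>u v. ?b u v w)" for w
    by (rule tri_bilin12[OF subHC subHC subA tri]) auto
  have b23: "bilin_on HC UNIV tscale sa tscale (\<lambda>v w. ?b u v w)" if "u \<in> HC" for u
    by (rule tri_bilin23[OF subHC subHC subA tri that])
  have klb: "bilin_on HC UNIV tscale sa tscale (\<lambda>p w. tlift HC HC tscale tscale (\<lambda>u v. ?b u v w) (D' p))"
  proof (rule bilin_onI2)
    fix w
    show "lin_on HC tscale tscale (\<lambda>p. tlift HC HC tscale tscale (\<lambda>u v. ?b u v w) (D' p))"
      by (rule lin_on_comp[OF D'_lin D'_HC tlift_lin_on[OF subHC subHC vsT b12]])
  next
    fix p
    show "lin_on UNIV sa tscale (\<lambda>w. tlift HC HC tscale tscale (\<lambda>u v. ?b u v w) (D' p))"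
      by (rule lin_on_tlift_fun[OF vsT D'_HC]) (rule lin_onI, simp_all add: tens_add2 tens_scale2)
  qed
  have krb: "bilin_on HC UNIV tscale sa tscale (\<lambda>u p. tlift HC UNIV tscale sa (\<lambda>v w. ?b u v w) (psi p))"
  proof (rule bilin_onI2)
    fix p
    show "lin_on HC tscale tscale (\<lambda>u. tlift HC UNIV tscale sa (\<lambda>v w. ?b u v w) (psi p))"
      by (rule lin_on_tlift_fun[OF vsT psi_tspace]) (rule lin_onI, simp_all add: tens_add1 tens_scale1)
  next
    fix u assume "u \<in> HC"
    then show "lin_on UNIV sa tscale (\<lambda>p. tlift HC UNIV tscale sa (\<lambda>v w. ?b u v w) (psi p))"
      by (intro lin_on_comp[OF psi_lin _ tlift_lin_on[OF subHC subA vsT b23]] psi_tspace)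
  qed
  let ?F = "TR (\<lambda>c y. TL (\<lambda>h b2. sw h (\<lambda>h1 h2. sw y (\<lambda>h2' h'. ?b (tens sh sh h1 (Si h')) (tens sh sh h2 (Si h2')) b2))) (psil c)) (psir a)"
  have L: "ev3 HC HC UNIV tscale tscale sa ?b (tassoc HC HC UNIV tscale tscale sa (tmap HC UNIV tscale sa tscale sa D' id (psi a))) = ?F"
    apply (subst ev3_tassoc_tmap[OF subHC subHC subA subHC vsT tri psi_tspace D'_HC])
    apply (subst psi_sw[OF vsT klb])
    apply (simp add: K1_tens[OF vsT b12] linr Si_anticomult[OF vsT])
    done
  have R: "ev3 HC HC UNIV tscale tscale sa ?b (tmap HC UNIV tscale sa tscale tscale id psi (psi a)) = ?F"
  proof -
    have "ev3 HC HC UNIV tscale tscale sa ?b (tmap HC UNIV tscale sa tscale tscale id psi (psi a))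
        = TR (\<lambda>x h'. TL (\<lambda>h b. TR (\<lambda>x2 h2'. TL (\<lambda>h2 b2. ?b (tens sh sh h (Si h')) (tens sh sh h2 (Si h2')) b2) (psil x2)) (psir b)) (psil x)) (psir a)"
      apply (subst ev3_tmap[OF subHC subHC subA subA vsT tri psi_tspace psi_tspace])
      apply (subst psi_sw[OF vsT krb])
      apply (simp add: psi_sw[OF vsT b23] HC_tens)
      done
    also have "\<dots> = TR (\<lambda>x h'. TL (\<lambda>h b. TL (\<lambda>h2 c. TR (\<lambda>b2 h2'. ?b (tens sh sh h (Si h')) (tens sh sh h2 (Si h2')) b2) (psir c)) (psil b)) (psil x)) (psir a)"
      by (intro tlift_cong2 bicomod_sw[OF vsT]) (intro linr)
    also have "\<dots> = TR (\<lambda>x h'. TL (\<lambda>h c. sw h (\<lambda>h1 h2. TR (\<lambda>b2 h2'. ?b (tens sh sh h1 (Si h')) (tens sh sh h2 (Si h2')) b2) (psir c))) (psil x)) (psir a)"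
      by (intro tlift_cong2 psil_coassoc_sw[OF vsT, symmetric]) (intro linr)
    also have "\<dots> = TR (\<lambda>x h'. TL (\<lambda>h c. TR (\<lambda>b2 h2'. sw h (\<lambda>h1 h2. ?b (tens sh sh h1 (Si h')) (tens sh sh h2 (Si h2')) b2)) (psir c)) (psil x)) (psir a)"
      by (rule tlift_cong2, rule tlift_cong2, rule tlift_swap)
    also have "\<dots> = TR (\<lambda>x h'. TR (\<lambda>c h2'. TL (\<lambda>h b2. sw h (\<lambda>h1 h2. ?b (tens sh sh h1 (Si h')) (tens sh sh h2 (Si h2')) b2)) (psil c)) (psir x)) (psir a)"
      by (intro tlift_cong2 bicomod_sw[OF vsT, symmetric]) (intro linr)
    also have "\<dots> = TR (\<lambda>c y. sw y (\<lambda>h2' h'. TL (\<lambda>h b2. sw h (\<lambda>h1 h2. ?b (tens sh sh h1 (Si h')) (tens sh sh h2 (Si h2')) b2)) (psil c))) (psir a)"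
      by (rule psir_coassoc_sw[OF vsT]) (intro linr)
    also have "\<dots> = TR (\<lambda>c y. TL (\<lambda>h b2. sw y (\<lambda>h2' h'. sw h (\<lambda>h1 h2. ?b (tens sh sh h1 (Si h')) (tens sh sh h2 (Si h2')) b2))) (psil c)) (psir a)"
      by (rule tlift_cong2, rule tlift_swap)
    also have "\<dots> = ?F"
      by (rule tlift_cong2, rule tlift_cong2, rule tlift_swap)
    finally show ?thesis .
  qed
  have inL: "tassoc HC HC UNIV tscale tscale sa (tmap HC UNIV tscale sa tscale sa D' id (psi a)) \<in> tspace HC (tspace HC UNIV tscale sa) tscale tscale"
    by (rule tassoc_tspace[OF subHC subHC subA tmap_tspace[OF subHC subA subsp_tspace[OF subHC] subA D'_HC _ psi_tspace]]) auto
  have inR: "tmap HC UNIV tscale sa tscale tscale id psi (psi a) \<in> tspace HC (tspace HC UNIV tscale sa) tscale tscale"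
    by (rule tmap_tspace[OF subHC subA subHC subsp_tspace[OF subHC] _ psi_tspace psi_tspace]) auto
  show ?thesis
    using ev3_tens[OF subHC subHC subA inL] ev3_tens[OF subHC subHC subA inR] L R by simp
qed

lemma lcomod_psi: "lcomod_alg HC tscale m' u' D' e' UNIV sa (*) 1 psi"
  unfolding lcomod_alg_def using psi_tspace psi_lin psi_coassoc psi_counit psi_mult psi_one by auto

lemma psi_pia:
  assumes x: "x \<in> HC"
  shows "psi (pia x a) = tmap HC UNIV tscale sa tscale sa id (pia x) (psi a)"
proof (rule HC_ext[OF vsT _ _ _ x, where F="\<lambda>x. psi (pia x a)" and G="\<lambda>x. tmap HC UNIV tscale sa tscale sa id (pia x) (psi a)"])
  show "lin_on HC tscale tscale (\<lambda>x. psi (pia x a))"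
    by (rule lin_on_comp[OF pia_lin1 _ psi_lin]) auto
  show "lin_on HC tscale tscale (\<lambda>x. tmap HC UNIV tscale sa tscale sa id (pia x) (psi a))"
    unfolding tmap_def by (rule lin_on_tlift_fun[OF vsT psi_tspace]) (intro lin_tens2 pia_lin1)
  fix h g
  let ?T = "tens tscale sa :: ('h,'h,'k) tensor \<Rightarrow> 'a \<Rightarrow> _"
  have in1: "tmap HC UNIV tscale sa tscale sa id (pia (tens sh sh h g)) (psi a) \<in> tspace HC UNIV tscale sa"
    by (rule tmap_tspace[OF subHC subA subHC subA _ _ psi_tspace]) auto
  have "psi (pia (tens sh sh h g) a) = tlift HC UNIV tscale sa ?T (psi (ract (lact h a) g))"
    by (simp add: pia_tens tlift_eta[OF psi_tspace])
  also have "\<dots> = TR (\<lambda>c g'. TL (\<lambda>k b. ?T (tens sh sh k (Si g')) (ract (lact h b) g)) (psil c)) (psir a)"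
    by (simp add: psi_sw[OF vsT tensKA_bilin] linr psir_ract_sw[OF vsT] psir_lact_sw[OF vsT] psil_ract_sw[OF vsT] psil_lact_sw[OF vsT])
  also have "\<dots> = tlift HC UNIV tscale sa (\<lambda>v w. ?T v (pia (tens sh sh h g) w)) (psi a)"
  proof -
    have bl: "bilin_on HC UNIV tscale sa tscale (\<lambda>v w. ?T v (pia (tens sh sh h g) w))"
      by (rule bilin_onI2) (auto intro!: lin_tens1 lin_tens2 lin_id pia_lin2)
    show ?thesis by (subst psi_sw[OF vsT bl]) (simp add: pia_tens)
  qed
  also have "\<dots> = tlift HC UNIV tscale sa ?T (tmap HC UNIV tscale sa tscale sa id (pia (tens sh sh h g)) (psi a))"
    by (subst tmap_tlift[OF subHC subA subHC subA vsT tensKA_bilin _ _ psi_tspace]) auto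
  also have "\<dots> = tmap HC UNIV tscale sa tscale sa id (pia (tens sh sh h g)) (psi a)"
    by (rule tlift_eta[OF in1])
  finally show "psi (pia (tens sh sh h g) a) = tmap HC UNIV tscale sa tscale sa id (pia (tens sh sh h g)) (psi a)" .
qed

end


context ctx begin

lemma main:
  "left_twisting_datum (hhop_carrier sh) tscale (hhop_mult sh) (hhop_unit sh)
            (hhop_comult sh \<Delta>) (hhop_counit sh \<epsilon>) UNIV sa (*) 1
            (pi_act sh lact ract) (psi_coact sh sa S psil psir)
       \<and> alg_iso_with_inv UNIV sa (lr_prod sh sa lact ract psil psir) 1
            UNIV sa (lt_prod (hhop_carrier sh) UNIV tscale sa (*) (pi_act sh lact ract)
                       (psi_coact sh sa S psil psir)) 1
            (lam sa sh S ract psir) (lam_inv sa sh ract psir)"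
  unfolding hhop_carrier_def left_twisting_datum_def alg_iso_with_inv_def alg_hom_def
  using bialg_HC A lmod_pia lcomod_psi psi_pia lam_lin lam_mult lam_one lami_lam lam_lami
  by auto

end

theorem theorem4p7:
  fixes sh :: "'k::field \<Rightarrow> 'h::ring_1 \<Rightarrow> 'h"
    and sa :: "'k \<Rightarrow> 'a::ring_1 \<Rightarrow> 'a"
    and \<Delta> :: "'h \<Rightarrow> ('h, 'h, 'k) tensor" and \<epsilon> :: "'h \<Rightarrow> 'k" and S :: "'h \<Rightarrow> 'h"
    and lact :: "'h \<Rightarrow> 'a \<Rightarrow> 'a" and ract :: "'a \<Rightarrow> 'h \<Rightarrow> 'a"
    and psil :: "'a \<Rightarrow> ('h, 'a, 'k) tensor" and psir :: "'a \<Rightarrow> ('a, 'h, 'k) tensor"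
  assumes A: "alg UNIV sa (*) 1"
    and H: "hopf UNIV sh (*) 1 \<Delta> \<epsilon> S"
    and Sbij: "bij S"
    and D: "lr_datum sh \<Delta> \<epsilon> sa lact ract psil psir"
  shows "left_twisting_datum (hhop_carrier sh) tscale (hhop_mult sh) (hhop_unit sh)
            (hhop_comult sh \<Delta>) (hhop_counit sh \<epsilon>) UNIV sa (*) 1
            (pi_act sh lact ract) (psi_coact sh sa S psil psir)
       \<and> alg_iso_with_inv UNIV sa (lr_prod sh sa lact ract psil psir) 1
            UNIV sa (lt_prod (hhop_carrier sh) UNIV tscale sa (*) (pi_act sh lact ract)
                       (psi_coact sh sa S psil psir)) 1
            (lam sa sh S ract psir) (lam_inv sa sh ract psir)"
  by (rule ctx.main[OF ctx.intro[OF A H Sbij D]])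


end
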